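(* Fix integers $T,K>1$ and nonnegative numbers $\epsilon(1),\dots,\epsilon(K)$ such that $\min_{j:\epsilon(j)>0}\epsilon(j)^2\ge\frac{2}{T}\sum_{j}\epsilon(j)^2$. Then there exist fixed parameters $m(1),\dots,m(K)$ such that the following holds: for any (possibly randomized) learner strategy $A$ there exists a loss assignment $\{\ell_t(j)\}_{t\le T,j\le K}$ satisfying $|\ell_t(j)-m(j)|\le\epsilon(j)$ for all $t,j$, such that \[ \mathbb{E}_A\Big[\sum_{t=1}^{T}\ell_t(I_t)\Big]-\min_{j=1,\dots,K}\sum_{t=1}^{T}\ell_t(j)\;\ge\; \begin{cases} c\sqrt{T\sum_{j=1}^{K}\epsilon(j)^2} & \text{with bandit feedback},\\ c\sqrt{T\max_{j}\epsilon(j)^2} & \text{with full information feedback},\end{cases} \] where $c>0$ is a universal constant.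
   Context: Repeated game over $K$ arms and $T$ rounds: the loss assignment is fixed in advance (oblivious adversary); at each round the learner picks $I_t\in\{1,\dots,K\}$ and incurs $\ell_t(I_t)$. With bandit feedback she then observes only $\ell_t(I_t)$; with full information she observes $\ell_t(i)$ for all $i$. $I_t$ may depend on previous observations and the learner's internal randomness; the expectation is over that randomness. *)

theory Defs
  imports "HOL-Probability.Probability"
begin

text \<open>Arms are 1..K, rounds are 1..T. A loss assignment is l :: nat => nat => real,
  l t j = loss of arm j at round t (fixed in advance: oblivious adversary).

  A (possibly randomized) learner is given as a behavioural strategy: a map from the
  history observed so far (own past actions together with the observed feedback) to a
  probability distribution over the next arm. This covers every learner using internal
  randomness (Kuhn's theorem for games of perfect recall).\<close>

type_synonym bandit_learner = "(nat \<times> real) list \<Rightarrow> nat pmf"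
type_synonym full_learner = "(nat \<times> (nat \<Rightarrow> real)) list \<Rightarrow> nat pmf"

definition valid_bandit_learner :: "nat \<Rightarrow> bandit_learner \<Rightarrow> bool" where
  "valid_bandit_learner K A \<longleftrightarrow> (\<forall>h. set_pmf (A h) \<subseteq> {1..K})"

definition valid_full_learner :: "nat \<Rightarrow> full_learner \<Rightarrow> bool" where
  "valid_full_learner K A \<longleftrightarrow> (\<forall>h. set_pmf (A h) \<subseteq> {1..K})"

fun bandit_hist :: "bandit_learner \<Rightarrow> (nat \<Rightarrow> nat \<Rightarrow> real) \<Rightarrow> nat \<Rightarrow> (nat \<times> real) list pmf" where
  "bandit_hist A l 0 = return_pmf []"
| "bandit_hist A l (Suc t) =
     bind_pmf (bandit_hist A l t) (\<lambda>h. map_pmf (\<lambda>i. h @ [(i, l (Suc t) i)]) (A h))"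

fun full_hist :: "full_learner \<Rightarrow> (nat \<Rightarrow> nat \<Rightarrow> real) \<Rightarrow> nat \<Rightarrow> (nat \<times> (nat \<Rightarrow> real)) list pmf" where
  "full_hist A l 0 = return_pmf []"
| "full_hist A l (Suc t) =
     bind_pmf (full_hist A l t) (\<lambda>h. map_pmf (\<lambda>i. h @ [(i, l (Suc t))]) (A h))"

definition bandit_exp_loss :: "bandit_learner \<Rightarrow> (nat \<Rightarrow> nat \<Rightarrow> real) \<Rightarrow> nat \<Rightarrow> real" where
  "bandit_exp_loss A l T =
     measure_pmf.expectation (bandit_hist A l T) (\<lambda>h. \<Sum>k<length h. snd (h ! k))"

definition full_exp_loss :: "full_learner \<Rightarrow> (nat \<Rightarrow> nat \<Rightarrow> real) \<Rightarrow> nat \<Rightarrow> real" where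
  "full_exp_loss A l T =
     measure_pmf.expectation (full_hist A l T) (\<lambda>h. \<Sum>k<length h. snd (h ! k) (fst (h ! k)))"

definition best_arm_loss :: "nat \<Rightarrow> (nat \<Rightarrow> nat \<Rightarrow> real) \<Rightarrow> nat \<Rightarrow> real" where
  "best_arm_loss K l T = (MIN j\<in>{1..K}. \<Sum>t=1..T. l t j)"

end

theory Submission
  imports Defs
begin

lemma E_sum:
  fixes f :: "'a \<Rightarrow> real"
  assumes "finite (set_pmf p)"
  shows "measure_pmf.expectation p f = (\<Sum>x\<in>set_pmf p. pmf p x * f x)"
  by (subst integral_measure_pmf[of "set_pmf p"]) (auto simp: assms)

lemma E_mono:
  fixes f g :: "'a \<Rightarrow> real"
  assumes "finite (set_pmf p)" "\<And>x. x \<in> set_pmf p \<Longrightarrow> f x \<le> g x"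
  shows "measure_pmf.expectation p f \<le> measure_pmf.expectation p g"
  unfolding E_sum[OF assms(1)] by (intro sum_mono mult_left_mono assms(2)) auto

lemma E_cong:
  fixes f g :: "'a \<Rightarrow> real"
  assumes "finite (set_pmf p)" "\<And>x. x \<in> set_pmf p \<Longrightarrow> f x = g x"
  shows "measure_pmf.expectation p f = measure_pmf.expectation p g"
  unfolding E_sum[OF assms(1)] by (intro sum.cong) (auto simp: assms(2))

lemma E_add:
  fixes f g :: "'a \<Rightarrow> real"
  assumes "finite (set_pmf p)"
  shows "measure_pmf.expectation p (\<lambda>x. f x + g x) = measure_pmf.expectation p f + measure_pmf.expectation p g"
  unfolding E_sum[OF assms(1)] by (simp add: sum.distrib algebra_simps)

lemma E_diff:
  fixes f g :: "'a \<Rightarrow> real"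
  assumes "finite (set_pmf p)"
  shows "measure_pmf.expectation p (\<lambda>x. f x - g x) = measure_pmf.expectation p f - measure_pmf.expectation p g"
  unfolding E_sum[OF assms(1)] by (simp add: sum_subtractf algebra_simps)

lemma E_cmult:
  fixes f :: "'a \<Rightarrow> real"
  assumes "finite (set_pmf p)"
  shows "measure_pmf.expectation p (\<lambda>x. c * f x) = c * measure_pmf.expectation p f"
  unfolding E_sum[OF assms(1)] by (simp add: sum_distrib_left algebra_simps)

lemma E_const: "measure_pmf.expectation p (\<lambda>x. c) = (c::real)"
  by simp

lemma E_bind:
  fixes h :: "'b \<Rightarrow> real"
  assumes "finite (set_pmf p)" "\<And>x. x \<in> set_pmf p \<Longrightarrow> finite (set_pmf (f x))"
  shows "measure_pmf.expectation (bind_pmf p f) h = measure_pmf.expectation p (\<lambda>x. measure_pmf.expectation (f x) h)"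
  by (subst pmf_expectation_bind[of "set_pmf p"]) (auto simp: assms E_sum)

lemma finite_bind:
  assumes "finite (set_pmf p)" "\<And>x. x \<in> set_pmf p \<Longrightarrow> finite (set_pmf (f x))"
  shows "finite (set_pmf (bind_pmf p f))"
  using assms by simp

lemma E_sq: 
  fixes f :: "'a \<Rightarrow> real"
  assumes "finite (set_pmf p)"
  shows "(measure_pmf.expectation p f)^2 \<le> measure_pmf.expectation p (\<lambda>x. (f x)^2)"
proof -
  have "(\<Sum>x\<in>set_pmf p. sqrt (pmf p x) * (sqrt (pmf p x) * f x))\<^sup>2 \<le> (\<Sum>x\<in>set_pmf p. (sqrt (pmf p x))\<^sup>2) * (\<Sum>x\<in>set_pmf p. (sqrt (pmf p x) * f x)\<^sup>2)"
    by (rule Cauchy_Schwarz_ineq_sum)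
  moreover have "(\<Sum>x\<in>set_pmf p. (sqrt (pmf p x))\<^sup>2) = 1"
    using sum_pmf_eq_1[OF assms] by (simp add: pmf_nonneg) 
  ultimately show ?thesis unfolding E_sum[OF assms]
    by (simp add: power_mult_distrib pmf_nonneg mult.assoc[symmetric])
qed

lemma E_CS: 
  fixes f g :: "'a \<Rightarrow> real"
  assumes "finite (set_pmf p)"
  shows "(measure_pmf.expectation p (\<lambda>x. f x * g x))^2 \<le> measure_pmf.expectation p (\<lambda>x. (f x)^2) * measure_pmf.expectation p (\<lambda>x. (g x)^2)"
proof -
  have "(\<Sum>x\<in>set_pmf p. (sqrt (pmf p x) * f x) * (sqrt (pmf p x) * g x))\<^sup>2 \<le> (\<Sum>x\<in>set_pmf p. (sqrt (pmf p x) * f x)\<^sup>2) * (\<Sum>x\<in>set_pmf p. (sqrt (pmf p x) * g x)\<^sup>2)"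
    by (rule Cauchy_Schwarz_ineq_sum)
  then show ?thesis unfolding E_sum[OF assms]
    by (simp add: power_mult_distrib pmf_nonneg algebra_simps)
qed


fun proc :: "(('a \<times> 'o) list \<Rightarrow> 'a pmf) \<Rightarrow> (nat \<Rightarrow> ('a \<times> 'o) list \<Rightarrow> 'a \<Rightarrow> 'o pmf) \<Rightarrow> nat \<Rightarrow> ('a \<times> 'o) list pmf" where
  "proc A F 0 = return_pmf []"
| "proc A F (Suc t) = bind_pmf (proc A F t) (\<lambda>h. bind_pmf (A h) (\<lambda>i. map_pmf (\<lambda>y. h @ [(i, y)]) (F (Suc t) h i)))"

lemma proc_len: "h \<in> set_pmf (proc A F t) \<Longrightarrow> length h = t"
  by (induction t arbitrary: h) auto

lemma proc_supp:
  "h \<in> set_pmf (proc A F t) \<Longrightarrow> s < length h \<Longrightarrow>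
     fst (h!s) \<in> set_pmf (A (take s h)) \<and> snd (h!s) \<in> set_pmf (F (Suc s) (take s h) (fst (h!s)))"
proof (induction t arbitrary: h)
  case 0 then show ?case by simp
next
  case (Suc t)
  then obtain h' i y where h: "h = h' @ [(i,y)]" "h' \<in> set_pmf (proc A F t)" "i \<in> set_pmf (A h')"
      "y \<in> set_pmf (F (Suc t) h' i)" by auto
  have lh: "length h' = t" using h(2) proc_len by blast
  show ?case
  proof (cases "s < length h'")
    case True
    then show ?thesis using Suc.IH[OF h(2) True] h(1) by (simp add: nth_append)
  next
    case False
    then have "s = length h'" using Suc.prems h(1) by simp
    then show ?thesis using h lh by (simp add: nth_append)
  qed
qed

lemma proc_fin:
  assumes "\<And>h. finite (set_pmf (A h))" "\<And>s h i. finite (set_pmf (F s h i))"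
  shows "finite (set_pmf (proc A F t))"
  by (induction t) (auto simp: assms)

lemma E_proc_step:
  fixes f :: "_ \<Rightarrow> real"
  assumes "\<And>h. finite (set_pmf (A h))" "\<And>s h i. finite (set_pmf (F s h i))"
  shows "measure_pmf.expectation (proc A F (Suc t)) f =
     measure_pmf.expectation (proc A F t) (\<lambda>h. measure_pmf.expectation (A h) (\<lambda>i.
        measure_pmf.expectation (F (Suc t) h i) (\<lambda>y. f (h @ [(i,y)]))))"
  by (simp add: E_bind proc_fin assms)

lemma bandit_hist_proc: "bandit_hist A l t = proc A (\<lambda>s h i. return_pmf (l s i)) t"
  by (induction t) (simp_all add: map_pmf_def bind_return_pmf)

lemma full_hist_proc: "full_hist A l t = proc A (\<lambda>s h i. return_pmf (l s)) t"
  by (induction t) (simp_all add: map_pmf_def bind_return_pmf)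

fun prior :: "(nat \<Rightarrow> (nat \<Rightarrow> real) pmf) \<Rightarrow> nat \<Rightarrow> (nat \<Rightarrow> nat \<Rightarrow> real) pmf" where
  "prior D 0 = return_pmf (\<lambda>_ _. 0)"
| "prior D (Suc t) = bind_pmf (prior D t) (\<lambda>l. map_pmf (\<lambda>r. l(Suc t := r)) (D (Suc t)))"

lemma prior_fin: "(\<And>s. finite (set_pmf (D s))) \<Longrightarrow> finite (set_pmf (prior D t))"
  by (induction t) auto

lemma prior_supp: "l \<in> set_pmf (prior D t) \<Longrightarrow> s \<in> {1..t} \<Longrightarrow> l s \<in> set_pmf (D s)"
proof (induction t arbitrary: l)
  case 0 then show ?case by simp
next
  case (Suc t)
  then obtain l' r where "l = l'(Suc t := r)" "l' \<in> set_pmf (prior D t)" "r \<in> set_pmf (D (Suc t))" by auto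
  then show ?case using Suc by (cases "s = Suc t") auto
qed

lemma E_prior_step:
  fixes f :: "_ \<Rightarrow> real"
  assumes "\<And>s. finite (set_pmf (D s))"
  shows "measure_pmf.expectation (prior D (Suc t)) f =
     measure_pmf.expectation (prior D t) (\<lambda>l. measure_pmf.expectation (D (Suc t)) (\<lambda>r. f (l(Suc t := r))))"
  by (simp add: E_bind prior_fin assms)

lemma proc_local:
  "(\<And>s. s \<in> {1..t} \<Longrightarrow> l s = l' s) \<Longrightarrow>
   proc A (\<lambda>s h i. return_pmf (obs (l s) i)) t = proc A (\<lambda>s h i. return_pmf (obs (l' s) i)) t"
proof (induction t)
  case 0 then show ?case by simp
next
  case (Suc t)
  have "proc A (\<lambda>s h i. return_pmf (obs (l s) i)) t = proc A (\<lambda>s h i. return_pmf (obs (l' s) i)) t"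
    using Suc by auto
  then show ?case using Suc.prems[of "Suc t"] by simp
qed

lemma prior_mix:
  "bind_pmf (prior D t) (\<lambda>l. proc A (\<lambda>s h i. return_pmf (obs (l s) i)) t)
     = proc A (\<lambda>s h i. map_pmf (\<lambda>r. obs r i) (D s)) t"
proof (induction t)
  case 0 then show ?case by simp
next
  case (Suc t)
  have loc: "proc A (\<lambda>s h i. return_pmf (obs (if s = Suc t then r else l s) i)) t = proc A (\<lambda>s h i. return_pmf (obs (l s) i)) t" for l r
    by (rule proc_local[where l="\<lambda>s. if s = Suc t then r else l s" and l'=l]) auto
  have "bind_pmf (prior D (Suc t)) (\<lambda>l. proc A (\<lambda>s h i. return_pmf (obs (l s) i)) (Suc t))
     = bind_pmf (prior D t) (\<lambda>l. bind_pmf (D (Suc t)) (\<lambda>r.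
         bind_pmf (proc A (\<lambda>s h i. return_pmf (obs (l s) i)) t) (\<lambda>h. bind_pmf (A h) (\<lambda>i. return_pmf (h @ [(i, obs r i)])))))"
    by (simp add: loc bind_assoc_pmf bind_return_pmf map_pmf_def)
  also have "\<dots> = bind_pmf (prior D t) (\<lambda>l. 
         bind_pmf (proc A (\<lambda>s h i. return_pmf (obs (l s) i)) t) (\<lambda>h. bind_pmf (A h) (\<lambda>i. bind_pmf (D (Suc t)) (\<lambda>r. return_pmf (h @ [(i, obs r i)])))))"
    by (simp add: bind_commute_pmf[of "D (Suc t)"])
  also have "\<dots> = bind_pmf (bind_pmf (prior D t) (\<lambda>l. proc A (\<lambda>s h i. return_pmf (obs (l s) i)) t))
       (\<lambda>h. bind_pmf (A h) (\<lambda>i. map_pmf (\<lambda>y. h @ [(i, y)]) (map_pmf (\<lambda>r. obs r i) (D (Suc t)))))"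
    by (simp add: bind_assoc_pmf map_pmf_def bind_return_pmf)
  also have "\<dots> = proc A (\<lambda>s h i. map_pmf (\<lambda>r. obs r i) (D s)) (Suc t)"
    by (simp add: Suc)
  finally show ?case .
qed


lemma sum_upd: "(\<Sum>s=1..Suc t. (l(Suc t := r)) s k) = (\<Sum>s=1..t. l s k) + (r k :: real)"
proof -
  have "(\<Sum>s=1..Suc t. (l(Suc t := r)) s k) = (l(Suc t := r)) (Suc t) k + (\<Sum>s=1..t. (l(Suc t := r)) s k)"
    by (simp add: atLeastAtMostSuc_conv)
  also have "(\<Sum>s=1..t. (l(Suc t := r)) s k) = (\<Sum>s=1..t. l s k)"
    by (intro sum.cong) auto
  finally show ?thesis by simp
qed

definition rw_row :: "nat \<Rightarrow> real \<Rightarrow> (nat \<Rightarrow> real) pmf" where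
  "rw_row k e = map_pmf (\<lambda>b j. if j = k then (if b then e else -e) else 0) (bernoulli_pmf (1/2))"

lemma rw_fin: "finite (set_pmf (rw_row k e))"
  unfolding rw_row_def by (simp add: finite_subset[OF subset_UNIV])

lemma E_rw_row: "measure_pmf.expectation (rw_row k e) (\<phi> :: _ \<Rightarrow> real) =
   (\<phi> (\<lambda>j. if j = k then e else 0) + \<phi> (\<lambda>j. if j = k then -e else 0)) / 2"
  unfolding rw_row_def by simp

lemma rw_supp: "r \<in> set_pmf (rw_row k e) \<Longrightarrow> j \<noteq> k \<Longrightarrow> r j = 0"
  "r \<in> set_pmf (rw_row k e) \<Longrightarrow> \<bar>r k\<bar> = \<bar>e\<bar>"
  unfolding rw_row_def by auto

lemma rw_m1: "measure_pmf.expectation (prior (\<lambda>s. rw_row k e) t) (\<lambda>l. \<Sum>s=1..t. l s k) = 0"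
proof (induction t)
  case 0 then show ?case by simp
next
  case (Suc t)
  have "measure_pmf.expectation (prior (\<lambda>s. rw_row k e) (Suc t)) (\<lambda>l. \<Sum>s=1..Suc t. l s k)
     = measure_pmf.expectation (prior (\<lambda>s. rw_row k e) t) (\<lambda>l. \<Sum>s=1..t. l s k)"
    apply (subst E_prior_step[OF rw_fin])
    apply (simp only: sum_upd E_rw_row)
    apply (rule arg_cong[where f="measure_pmf.expectation _"])
    apply (rule ext)
    apply simp
    done
  then show ?case using Suc.IH by simp
qed

lemma rw_m2: "measure_pmf.expectation (prior (\<lambda>s. rw_row k e) t) (\<lambda>l. (\<Sum>s=1..t. l s k)^2) = real t * e^2"
proof (induction t)
  case 0 then show ?case by simp
next
  case (Suc t)
  have "measure_pmf.expectation (prior (\<lambda>s. rw_row k e) (Suc t)) (\<lambda>l. (\<Sum>s=1..Suc t. l s k)^2)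
     = measure_pmf.expectation (prior (\<lambda>s. rw_row k e) t) (\<lambda>l. (\<Sum>s=1..t. l s k)^2 + e^2)"
    apply (subst E_prior_step[OF rw_fin])
    apply (simp only: sum_upd E_rw_row)
    apply (rule arg_cong[where f="measure_pmf.expectation _"])
    apply (rule ext)
    apply (simp add: power2_eq_square field_simps)
    done
  also have "\<dots> = measure_pmf.expectation (prior (\<lambda>s. rw_row k e) t) (\<lambda>l. (\<Sum>s=1..t. l s k)^2) + e^2"
    by (rule E_add[OF prior_fin[OF rw_fin], where g="\<lambda>_. e^2", simplified])
  also have "\<dots> = real (Suc t) * e^2"
    unfolding Suc.IH by (simp add: algebra_simps)
  finally show ?case .
qed

lemma rw_m4: "measure_pmf.expectation (prior (\<lambda>s. rw_row k e) t) (\<lambda>l. (\<Sum>s=1..t. l s k)^4) = e^4 * (3 * (real t)^2 - 2 * real t)"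
proof (induction t)
  case 0 then show ?case by simp
next
  case (Suc t)
  have fin: "finite (set_pmf (prior (\<lambda>s. rw_row k e) t))" by (rule prior_fin[OF rw_fin])
  have "measure_pmf.expectation (prior (\<lambda>s. rw_row k e) (Suc t)) (\<lambda>l. (\<Sum>s=1..Suc t. l s k)^4)
     = measure_pmf.expectation (prior (\<lambda>s. rw_row k e) t) (\<lambda>l. ((\<Sum>s=1..t. l s k)^4 + (6 * e^2) * (\<Sum>s=1..t. l s k)^2) + e^4)"
    apply (subst E_prior_step[OF rw_fin])
    apply (simp only: sum_upd E_rw_row)
    apply (rule arg_cong[where f="measure_pmf.expectation _"])
    apply (rule ext)
    apply (simp add: power4_eq_xxxx power2_eq_square field_simps)
    done
  also have "\<dots> = measure_pmf.expectation (prior (\<lambda>s. rw_row k e) t) (\<lambda>l. (\<Sum>s=1..t. l s k)^4) + (6 * e^2) * measure_pmf.expectation (prior (\<lambda>s. rw_row k e) t) (\<lambda>l. (\<Sum>s=1..t. l s k)^2) + e^4"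
    by (simp only: E_add[OF fin] E_cmult[OF fin] E_const)
  also have "\<dots> = e^4 * (3 * (real (Suc t))^2 - 2 * real (Suc t))"
    unfolding Suc.IH rw_m2 by (simp add: algebra_simps power2_eq_square power4_eq_xxxx)
  finally show ?case .
qed

lemma sq_abs: "(x::real)^2 = \<bar>x\<bar> * \<bar>x\<bar>"
  by (simp add: power2_eq_square)

lemma rw_abs:
  assumes "e > 0" "t > 0"
  shows "measure_pmf.expectation (prior (\<lambda>s. rw_row k e) t) (\<lambda>l. \<bar>\<Sum>s=1..t. l s k\<bar>) \<ge> sqrt (t * e^2 / 3)"
proof -
  let ?p = "prior (\<lambda>s. rw_row k e) t"
  let ?S = "\<lambda>l::nat\<Rightarrow>nat\<Rightarrow>real. \<Sum>s=1..t. l s k"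
  have fin: "finite (set_pmf ?p)" by (simp add: prior_fin rw_fin)
  define a where "a = measure_pmf.expectation ?p (\<lambda>l. \<bar>?S l\<bar>)"
  define b where "b = measure_pmf.expectation ?p (\<lambda>l. \<bar>?S l\<bar>^3)"
  have a0: "a \<ge> 0" unfolding a_def by (rule Bochner_Integration.integral_nonneg) auto
  have "(measure_pmf.expectation ?p (\<lambda>l. sqrt \<bar>?S l\<bar> * (sqrt \<bar>?S l\<bar> * \<bar>?S l\<bar>)))^2
     \<le> measure_pmf.expectation ?p (\<lambda>l. (sqrt \<bar>?S l\<bar>)^2) * measure_pmf.expectation ?p (\<lambda>l. (sqrt \<bar>?S l\<bar> * \<bar>?S l\<bar>)^2)"
    by (rule E_CS[OF fin])
  also have "(\<lambda>l. sqrt \<bar>?S l\<bar> * (sqrt \<bar>?S l\<bar> * \<bar>?S l\<bar>)) = (\<lambda>l. (?S l)^2)"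
  proof
    fix l :: "nat \<Rightarrow> nat \<Rightarrow> real"
    have "sqrt \<bar>?S l\<bar> * (sqrt \<bar>?S l\<bar> * \<bar>?S l\<bar>) = (sqrt \<bar>?S l\<bar> * sqrt \<bar>?S l\<bar>) * \<bar>?S l\<bar>"
      by (simp only: mult.assoc)
    also have "sqrt \<bar>?S l\<bar> * sqrt \<bar>?S l\<bar> = \<bar>?S l\<bar>" by simp
    also have "\<bar>?S l\<bar> * \<bar>?S l\<bar> = (?S l)^2" by (simp add: power2_eq_square)
    finally show "sqrt \<bar>?S l\<bar> * (sqrt \<bar>?S l\<bar> * \<bar>?S l\<bar>) = (?S l)^2" .
  qed
  also have "(\<lambda>l. (sqrt \<bar>?S l\<bar>)^2) = (\<lambda>l. \<bar>?S l\<bar>)" by auto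
  also have "(\<lambda>l. (sqrt \<bar>?S l\<bar> * \<bar>?S l\<bar>)^2) = (\<lambda>l. \<bar>?S l\<bar>^3)"
  proof
    fix l :: "nat \<Rightarrow> nat \<Rightarrow> real"
    have "(sqrt \<bar>?S l\<bar> * \<bar>?S l\<bar>)^2 = (sqrt \<bar>?S l\<bar>)^2 * \<bar>?S l\<bar>^2" by (rule power_mult_distrib)
    also have "(sqrt \<bar>?S l\<bar>)^2 = \<bar>?S l\<bar>" by simp
    also have "\<bar>?S l\<bar> * \<bar>?S l\<bar>^2 = \<bar>?S l\<bar>^3" by (simp add: power3_eq_cube power2_eq_square)
    finally show "(sqrt \<bar>?S l\<bar> * \<bar>?S l\<bar>)^2 = \<bar>?S l\<bar>^3" .
  qed
  finally have c1: "(t * e^2)^2 \<le> a * b" unfolding a_def b_def rw_m2 .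
  have "(measure_pmf.expectation ?p (\<lambda>l. \<bar>?S l\<bar> * (?S l)^2))^2
     \<le> measure_pmf.expectation ?p (\<lambda>l. \<bar>?S l\<bar>^2) * measure_pmf.expectation ?p (\<lambda>l. ((?S l)^2)^2)"
    by (rule E_CS[OF fin])
  also have "(\<lambda>l. \<bar>?S l\<bar> * (?S l)^2) = (\<lambda>l. \<bar>?S l\<bar>^3)"
    by (simp add: fun_eq_iff power3_eq_cube power2_eq_square)
  also have "(\<lambda>l. \<bar>?S l\<bar>^2) = (\<lambda>l. (?S l)^2)" by auto
  also have "(\<lambda>l. ((?S l)^2)^2) = (\<lambda>l. (?S l)^4)" by (auto simp: fun_eq_iff)
  finally have c2: "b^2 \<le> (t*e^2) * (e^4 * (3 * (real t)^2 - 2 * real t))" unfolding b_def rw_m2 rw_m4 .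
  have tpos: "real t > 0" using assms by simp
  have c2': "b^2 \<le> (t*e^2) * (e^4 * (3 * t^2))"
    using c2 by (rule order_trans) (use tpos assms in \<open>auto intro!: mult_left_mono simp: power2_eq_square\<close>)
  have "((t * e^2)^2)^2 \<le> (a*b)^2"
    using c1 by (intro power_mono) (auto)
  also have "\<dots> = a^2 * b^2" by (simp add: power_mult_distrib)
  also have "\<dots> \<le> a^2 * ((t*e^2) * (e^4 * (3 * t^2)))"
    by (intro mult_left_mono c2') auto
  finally have "((t * e^2)^2)^2 \<le> a^2 * ((t*e^2) * (e^4 * (3 * t^2)))" .
  then have "(t*e^2)^3 * (t * e^2) \<le> (a^2 * 3) * (t*e^2)^3"
    by (simp add: power_mult_distrib algebra_simps power2_eq_square power3_eq_cube power4_eq_xxxx)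
  moreover have "(t*e^2)^3 > 0" using tpos assms by simp
  ultimately have "t * e^2 \<le> a^2 * 3"
    by (metis mult.commute mult_le_cancel_left_pos)
  then have "t * e^2 / 3 \<le> a^2" by simp
  then have "sqrt (t * e^2 / 3) \<le> sqrt (a^2)" by (rule real_sqrt_le_mono)
  then show ?thesis using a0 unfolding a_def by simp
qed


lemma sum_snoc: "(\<Sum>s<length (h@[x]). f ((h@[x])!s)) = (\<Sum>s<length h. f (h!s)) + (f x :: real)"
  by (simp add: nth_append)

lemma E_proc_add:
  fixes g :: "'a \<Rightarrow> 'o \<Rightarrow> real" and \<mu> :: "'a \<Rightarrow> real"
  assumes finA: "\<And>h. finite (set_pmf (A h))" and finF: "\<And>s h i. finite (set_pmf (F s h i))"
    and mean: "\<And>s h i. i \<in> set_pmf (A h) \<Longrightarrow> measure_pmf.expectation (F s h i) (g i) = \<mu> i"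
  shows "measure_pmf.expectation (proc A F t) (\<lambda>h. \<Sum>s<length h. g (fst (h!s)) (snd (h!s)))
       = measure_pmf.expectation (proc A F t) (\<lambda>h. \<Sum>s<length h. \<mu> (fst (h!s)))"
proof (induction t)
  case 0 then show ?case by simp
next
  case (Suc t)
  have fin: "finite (set_pmf (proc A F t))" by (rule proc_fin[OF finA finF])
  have "measure_pmf.expectation (proc A F (Suc t)) (\<lambda>h. \<Sum>s<length h. g (fst (h!s)) (snd (h!s)))
     = measure_pmf.expectation (proc A F t) (\<lambda>h. (\<Sum>s<length h. g (fst (h!s)) (snd (h!s))) + measure_pmf.expectation (A h) \<mu>)"
    apply (subst E_proc_step[OF finA finF])
    apply (simp only: sum_snoc[where f="\<lambda>x. g (fst x) (snd x)"] fst_conv snd_conv)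
    apply (rule E_cong[OF fin])
    apply (subst E_add[OF finF])
    apply (simp add: E_add[OF finA])
    apply (rule E_cong[OF finA])
    apply (simp add: mean)
    done
  also have "\<dots> = measure_pmf.expectation (proc A F t) (\<lambda>h. (\<Sum>s<length h. \<mu> (fst (h!s))) + measure_pmf.expectation (A h) \<mu>)"
    by (simp add: E_add[OF fin] Suc)
  also have "\<dots> = measure_pmf.expectation (proc A F (Suc t)) (\<lambda>h. \<Sum>s<length h. \<mu> (fst (h!s)))"
    apply (subst E_proc_step[OF finA finF])
    apply (simp only: sum_snoc[where f="\<lambda>x. \<mu> (fst x)"] fst_conv snd_conv)
    apply (rule E_cong[OF fin])
    apply (simp add: E_add[OF finA])
    done
  finally show ?case .
qed

lemma valid_bandit_fin: "valid_bandit_learner K A \<Longrightarrow> finite (set_pmf (A h))"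
  unfolding valid_bandit_learner_def by (meson finite_atLeastAtMost finite_subset)

lemma valid_full_fin: "valid_full_learner K A \<Longrightarrow> finite (set_pmf (A h))"
  unfolding valid_full_learner_def by (meson finite_atLeastAtMost finite_subset)

lemma best_le: "k \<in> {1..K} \<Longrightarrow> best_arm_loss K l T \<le> (\<Sum>t=1..T. l t k)"
  unfolding best_arm_loss_def by (rule Min_le) auto

lemma E_bandit_prior:
  assumes valid: "valid_bandit_learner K A" and finD: "\<And>s. finite (set_pmf (D s))"
  shows "measure_pmf.expectation (prior D T) (\<lambda>l. bandit_exp_loss A l T)
     = measure_pmf.expectation (proc A (\<lambda>s h i. map_pmf (\<lambda>r. r i) (D s)) T) (\<lambda>h. \<Sum>k<length h. snd (h ! k))"
proof -
  have "measure_pmf.expectation (prior D T) (\<lambda>l. bandit_exp_loss A l T)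
     = measure_pmf.expectation (bind_pmf (prior D T) (\<lambda>l. proc A (\<lambda>s h i. return_pmf (l s i)) T)) (\<lambda>h. \<Sum>k<length h. snd (h ! k))"
    unfolding bandit_exp_loss_def bandit_hist_proc
    by (subst E_bind) (auto simp: prior_fin finD intro!: proc_fin valid_bandit_fin[OF valid])
  also have "\<dots> = measure_pmf.expectation (proc A (\<lambda>s h i. map_pmf (\<lambda>r. r i) (D s)) T) (\<lambda>h. \<Sum>k<length h. snd (h ! k))"
    using prior_mix[where obs="\<lambda>r i. r i" and D=D and A=A and t=T] by simp
  finally show ?thesis .
qed

lemma E_full_prior:
  assumes valid: "valid_full_learner K A" and finD: "\<And>s. finite (set_pmf (D s))"
  shows "measure_pmf.expectation (prior D T) (\<lambda>l. full_exp_loss A l T)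
     = measure_pmf.expectation (proc A (\<lambda>s h i. D s) T) (\<lambda>h. \<Sum>k<length h. snd (h ! k) (fst (h ! k)))"
proof -
  have "measure_pmf.expectation (prior D T) (\<lambda>l. full_exp_loss A l T)
     = measure_pmf.expectation (bind_pmf (prior D T) (\<lambda>l. proc A (\<lambda>s h i. return_pmf (l s)) T)) (\<lambda>h. \<Sum>k<length h. snd (h ! k) (fst (h ! k)))"
    unfolding full_exp_loss_def full_hist_proc
    by (subst E_bind) (auto simp: prior_fin finD intro!: proc_fin valid_full_fin[OF valid])
  also have "\<dots> = measure_pmf.expectation (proc A (\<lambda>s h i. D s) T) (\<lambda>h. \<Sum>k<length h. snd (h ! k) (fst (h ! k)))"
    using prior_mix[where obs="\<lambda>r i. r" and D=D and A=A and t=T] by simp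
  finally show ?thesis .
qed

lemma rw_best:
  assumes "k \<in> {1..K}" "k' \<in> {1..K}" "k \<noteq> k'" "l \<in> set_pmf (prior (\<lambda>s. rw_row k e) T)"
  shows "best_arm_loss K l T \<le> - ((\<bar>\<Sum>t=1..T. l t k\<bar> - (\<Sum>t=1..T. l t k)) / 2)"
proof -
  have "(\<Sum>t=1..T. l t k') = 0"
    using prior_supp[OF assms(4)] rw_supp(1) assms(3) by (intro sum.neutral) fastforce
  then have "best_arm_loss K l T \<le> 0" using best_le[OF assms(2), of l T] by simp
  moreover have "best_arm_loss K l T \<le> (\<Sum>t=1..T. l t k)" by (rule best_le[OF assms(1)])
  ultimately show ?thesis by (cases "(\<Sum>t=1..T. l t k) \<ge> 0") auto
qed

lemma rw_negpart:
  assumes "e > 0" "T > 0"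
  shows "measure_pmf.expectation (prior (\<lambda>s. rw_row k e) T) (\<lambda>l. (\<bar>\<Sum>t=1..T. l t k\<bar> - (\<Sum>t=1..T. l t k)) / 2)
     \<ge> sqrt (T * e^2 / 3) / 2"
proof -
  let ?p = "prior (\<lambda>s. rw_row k e) T"
  have fin: "finite (set_pmf ?p)" by (rule prior_fin[OF rw_fin])
  have "measure_pmf.expectation ?p (\<lambda>l. (\<bar>\<Sum>t=1..T. l t k\<bar> - (\<Sum>t=1..T. l t k)) / 2)
     = measure_pmf.expectation ?p (\<lambda>l. (1/2) * (\<bar>\<Sum>t=1..T. l t k\<bar> - (\<Sum>t=1..T. l t k)))"
    by simp
  also have "\<dots> = (1/2) * (measure_pmf.expectation ?p (\<lambda>l. \<bar>\<Sum>t=1..T. l t k\<bar>) - measure_pmf.expectation ?p (\<lambda>l. \<Sum>t=1..T. l t k))"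
    unfolding E_cmult[OF fin] E_diff[OF fin] ..
  also have "\<dots> = (1/2) * measure_pmf.expectation ?p (\<lambda>l. \<bar>\<Sum>t=1..T. l t k\<bar>)"
    unfolding rw_m1 by simp
  finally show ?thesis using rw_abs[OF assms, of k] by linarith
qed

lemma rw_regret:
  fixes loss :: "(nat \<Rightarrow> nat \<Rightarrow> real) \<Rightarrow> real"
  assumes k: "k \<in> {1..K}" "k' \<in> {1..K}" "k \<noteq> k'"
    and e: "e > 0" and T: "T > 0"
    and L: "measure_pmf.expectation (prior (\<lambda>s. rw_row k e) T) loss = 0"
  shows "measure_pmf.expectation (prior (\<lambda>s. rw_row k e) T) (\<lambda>l. loss l - best_arm_loss K l T)
     \<ge> sqrt (T * e^2 / 3) / 2"
proof -
  let ?p = "prior (\<lambda>s. rw_row k e) T"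
  let ?N = "\<lambda>l. (\<bar>\<Sum>t=1..T. l t k\<bar> - (\<Sum>t=1..T. l t k)) / 2"
  have fin: "finite (set_pmf ?p)" by (rule prior_fin[OF rw_fin])
  have "measure_pmf.expectation ?p (\<lambda>l. best_arm_loss K l T) \<le> measure_pmf.expectation ?p (\<lambda>l. (-1) * ?N l)"
  proof (rule E_mono[OF fin])
    fix l assume "l \<in> set_pmf ?p"
    from rw_best[OF k this] show "best_arm_loss K l T \<le> (-1) * ?N l" by linarith
  qed
  also have "\<dots> = - measure_pmf.expectation ?p ?N"
    unfolding E_cmult[OF fin] by simp
  finally have "measure_pmf.expectation ?p (\<lambda>l. best_arm_loss K l T) \<le> - measure_pmf.expectation ?p ?N" .
  moreover have "measure_pmf.expectation ?p (\<lambda>l. loss l - best_arm_loss K l T)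
      = measure_pmf.expectation ?p loss - measure_pmf.expectation ?p (\<lambda>l. best_arm_loss K l T)"
    by (rule E_diff[OF fin])
  ultimately show ?thesis using rw_negpart[OF e T, of k] L by linarith
qed

lemma rw_bandit:
  assumes valid: "valid_bandit_learner K A" and k: "k \<in> {1..K}" "k' \<in> {1..K}" "k \<noteq> k'"
    and e: "e > 0" and T: "T > 0"
  shows "measure_pmf.expectation (prior (\<lambda>s. rw_row k e) T) (\<lambda>l. bandit_exp_loss A l T - best_arm_loss K l T)
     \<ge> sqrt (T * e^2 / 3) / 2"
proof (rule rw_regret[OF k e T])
  have finF: "finite (set_pmf (map_pmf (\<lambda>r. r i) (rw_row k e)))" for i by (simp add: rw_fin)
  show "measure_pmf.expectation (prior (\<lambda>s. rw_row k e) T) (\<lambda>l. bandit_exp_loss A l T) = 0"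
    unfolding E_bandit_prior[OF valid rw_fin]
    apply (subst E_proc_add[where \<mu>="\<lambda>_. 0"])
    apply (rule valid_bandit_fin[OF valid])
    apply (rule finF)
    apply (simp add: E_rw_row)
    apply simp
    done
qed

lemma rw_full:
  assumes valid: "valid_full_learner K A" and k: "k \<in> {1..K}" "k' \<in> {1..K}" "k \<noteq> k'"
    and e: "e > 0" and T: "T > 0"
  shows "measure_pmf.expectation (prior (\<lambda>s. rw_row k e) T) (\<lambda>l. full_exp_loss A l T - best_arm_loss K l T)
     \<ge> sqrt (T * e^2 / 3) / 2"
proof (rule rw_regret[OF k e T])
  show "measure_pmf.expectation (prior (\<lambda>s. rw_row k e) T) (\<lambda>l. full_exp_loss A l T) = 0"
    unfolding E_full_prior[OF valid rw_fin]
    apply (subst E_proc_add[where \<mu>="\<lambda>_. 0" and g="\<lambda>i y. y i"])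
    apply (rule valid_full_fin[OF valid])
    apply (rule rw_fin)
    apply (simp add: E_rw_row)
    apply simp
    done
qed


lemma proc_cong:
  assumes "\<And>s h i. i \<in> set_pmf (A h) \<Longrightarrow> F s h i = F' s h i"
  shows "proc A F t = proc A F' t"
  by (induction t) (auto intro!: bind_pmf_cong simp: assms)

lemma prior_lin:
  assumes finD: "\<And>s. finite (set_pmf (D s))" and c: "\<And>s. measure_pmf.expectation (D s) (\<lambda>r. r k) = c"
  shows "measure_pmf.expectation (prior D t) (\<lambda>l. \<Sum>s=1..t. l s k) = real t * c"
proof (induction t)
  case 0 then show ?case by simp
next
  case (Suc t)
  have fin: "finite (set_pmf (prior D t))" by (rule prior_fin[OF finD])
  have "measure_pmf.expectation (prior D (Suc t)) (\<lambda>l. \<Sum>s=1..Suc t. l s k)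
     = measure_pmf.expectation (prior D t) (\<lambda>l. (\<Sum>s=1..t. l s k) + c)"
    apply (subst E_prior_step[OF finD])
    apply (simp only: sum_upd)
    apply (rule E_cong[OF fin])
    apply (simp add: E_add[OF finD] c)
    done
  also have "\<dots> = real (Suc t) * c" unfolding E_add[OF fin] Suc.IH by (simp add: algebra_simps)
  finally show ?case .
qed

definition cnt :: "'a \<Rightarrow> ('a \<times> 'o) list \<Rightarrow> nat" where
  "cnt k h = length (filter (\<lambda>x. fst x = k) h)"

lemma cnt_snoc: "cnt k (h @ [x]) = cnt k h + (if fst x = k then 1 else 0)"
  by (simp add: cnt_def)

lemma cnt_le: "cnt k h \<le> length h"
  by (simp add: cnt_def)

lemma sum_cnt: "(\<Sum>s<length h. if fst (h!s) = k then c else 0) = c * real (cnt k h)"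
proof (induction h rule: rev_induct)
  case Nil then show ?case by (simp add: cnt_def)
next
  case (snoc x h)
  show ?case
    using sum_snoc[of "\<lambda>x. if fst x = k then c else 0" h x] snoc by (simp add: cnt_snoc algebra_simps)
qed

lemma sum_cnt_le: "finite J \<Longrightarrow> (\<Sum>k\<in>J. cnt k h) \<le> length h"
proof (induction h rule: rev_induct)
  case Nil then show ?case by (simp add: cnt_def)
next
  case (snoc x h)
  have "(\<Sum>k\<in>J. cnt k (h @ [x])) = (\<Sum>k\<in>J. cnt k h) + (\<Sum>k\<in>J. if fst x = k then 1 else 0)"
    by (simp add: cnt_snoc sum.distrib)
  also have "(\<Sum>k\<in>J. if fst x = k then 1 else (0::nat)) \<le> 1"
    using snoc.prems by (simp add: sum.If_cases)
  finally show ?case using snoc by simp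
qed

definition trunc :: "'a \<Rightarrow> nat \<Rightarrow> ('a \<times> 'o) list \<Rightarrow> ('a \<times> 'o) list" where
  "trunc k M h = foldl (\<lambda>u x. if M \<le> cnt k u then u else u @ [x]) [] h"

lemma trunc_snoc: "trunc k M (h @ [x]) = (if M \<le> cnt k (trunc k M h) then trunc k M h else trunc k M h @ [x])"
  by (simp add: trunc_def)

lemma cnt_trunc: "cnt k (trunc k M h) = min (cnt k h) M"
proof (induction h rule: rev_induct)
  case Nil then show ?case by (simp add: trunc_def cnt_def)
next
  case (snoc x h)
  then show ?case by (auto simp: trunc_snoc cnt_snoc)
qed

lemma trunc_id: "cnt k h < M \<Longrightarrow> trunc k M h = h"
proof (induction h rule: rev_induct)
  case Nil then show ?case by (simp add: trunc_def)
next
  case (snoc x h)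
  then have "cnt k h < M" by (simp add: cnt_snoc)
  with snoc show ?case by (simp add: trunc_snoc)
qed

lemma map_trunc_step:
  "map_pmf (trunc k M) (proc A F (Suc t)) = bind_pmf (map_pmf (trunc k M) (proc A F t))
     (\<lambda>u. if M \<le> cnt k u then return_pmf u else bind_pmf (A u) (\<lambda>i. map_pmf (\<lambda>y. u @ [(i, y)]) (F (Suc t) u i)))"
proof -
  have "map_pmf (trunc k M) (proc A F (Suc t)) = bind_pmf (proc A F t) (\<lambda>h. bind_pmf (A h) (\<lambda>i. map_pmf (\<lambda>y. trunc k M (h @ [(i, y)])) (F (Suc t) h i)))"
    by (simp add: map_bind_pmf map_pmf_comp)
  also have "\<dots> = bind_pmf (proc A F t) (\<lambda>h. (\<lambda>u. if M \<le> cnt k u then return_pmf u else bind_pmf (A u) (\<lambda>i. map_pmf (\<lambda>y. u @ [(i, y)]) (F (Suc t) u i))) (trunc k M h))"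
  proof (rule bind_pmf_cong[OF refl])
    fix h
    show "bind_pmf (A h) (\<lambda>i. map_pmf (\<lambda>y. trunc k M (h @ [(i, y)])) (F (Suc t) h i)) =
       (\<lambda>u. if M \<le> cnt k u then return_pmf u else bind_pmf (A u) (\<lambda>i. map_pmf (\<lambda>y. u @ [(i, y)]) (F (Suc t) u i))) (trunc k M h)"
    proof (cases "M \<le> cnt k h")
      case True
      then have "M \<le> cnt k (trunc k M h)" by (simp add: cnt_trunc)
      then show ?thesis by (simp add: trunc_snoc)
    next
      case False
      then have "trunc k M h = h" by (simp add: trunc_id)
      then show ?thesis using False by (simp add: trunc_snoc)
    qed
  qed
  also have "\<dots> = bind_pmf (map_pmf (trunc k M) (proc A F t))
     (\<lambda>u. if M \<le> cnt k u then return_pmf u else bind_pmf (A u) (\<lambda>i. map_pmf (\<lambda>y. u @ [(i, y)]) (F (Suc t) u i)))"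
    by (simp add: bind_map_pmf)
  finally show ?thesis .
qed

lemma map_trunc_eq:
  assumes "\<And>s h i. cnt k h < M \<Longrightarrow> F1 s h i = F2 s h i"
  shows "map_pmf (trunc k M) (proc A F1 t) = map_pmf (trunc k M) (proc A F2 t)"
proof (induction t)
  case 0 then show ?case by simp
next
  case (Suc t)
  show ?case
    unfolding map_trunc_step Suc
    by (intro bind_pmf_cong[OF refl]) (auto simp: assms)
qed


definition coin :: "real \<Rightarrow> real pmf" where
  "coin e = map_pmf (\<lambda>b. if b then e else -e) (bernoulli_pmf (1/2))"

definition bcoin :: "real \<Rightarrow> real \<Rightarrow> real pmf" where
  "bcoin e th = map_pmf (\<lambda>b. if b then e else -e) (bernoulli_pmf ((1 - th)/2))"

lemma coin_fin: "finite (set_pmf (coin e))"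
  unfolding coin_def by (simp add: finite_subset[OF subset_UNIV])

lemma bcoin_fin: "finite (set_pmf (bcoin e th))"
  unfolding bcoin_def by (simp add: finite_subset[OF subset_UNIV])

lemma E_coin: "measure_pmf.expectation (coin e) (\<phi> :: real \<Rightarrow> real) = (\<phi> e + \<phi> (-e)) / 2"
  unfolding coin_def by simp

lemma E_bcoin: "0 \<le> th \<Longrightarrow> th \<le> 1 \<Longrightarrow>
  measure_pmf.expectation (bcoin e th) (\<phi> :: real \<Rightarrow> real) = (1 - th)/2 * \<phi> e + (1 + th)/2 * \<phi> (-e)"
  unfolding bcoin_def by (auto simp: field_simps)

lemma coin_supp: "y \<in> set_pmf (coin e) \<Longrightarrow> \<bar>y\<bar> \<le> \<bar>e\<bar>"
  unfolding coin_def by auto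

lemma bcoin_supp: "y \<in> set_pmf (bcoin e th) \<Longrightarrow> \<bar>y\<bar> \<le> \<bar>e\<bar>"
  unfolding bcoin_def by auto

fun rowK :: "(nat \<Rightarrow> real pmf) \<Rightarrow> nat \<Rightarrow> (nat \<Rightarrow> real) pmf" where
  "rowK g 0 = return_pmf (\<lambda>_. 0)"
| "rowK g (Suc n) = bind_pmf (rowK g n) (\<lambda>r. map_pmf (\<lambda>y. r(Suc n := y)) (g (Suc n)))"

lemma rowK_fin: "(\<And>j. finite (set_pmf (g j))) \<Longrightarrow> finite (set_pmf (rowK g n))"
  by (induction n) auto

lemma rowK_supp: "r \<in> set_pmf (rowK g n) \<Longrightarrow> i \<in> {1..n} \<Longrightarrow> r i \<in> set_pmf (g i)"
proof (induction n arbitrary: r)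
  case 0 then show ?case by simp
next
  case (Suc n)
  then obtain r' y where "r = r'(Suc n := y)" "r' \<in> set_pmf (rowK g n)" "y \<in> set_pmf (g (Suc n))" by auto
  then show ?case using Suc by (cases "i = Suc n") auto
qed

lemma rowK_marg: "i \<in> {1..n} \<Longrightarrow> map_pmf (\<lambda>r. r i) (rowK g n) = g i"
proof (induction n)
  case 0 then show ?case by simp
next
  case (Suc n)
  show ?case
  proof (cases "i = Suc n")
    case True
    then show ?thesis by (simp add: map_bind_pmf map_pmf_comp)
  next
    case False
    then have "i \<in> {1..n}" using Suc.prems by auto
    have "map_pmf (\<lambda>r. r i) (rowK g (Suc n)) = bind_pmf (rowK g n) (\<lambda>r. return_pmf (r i))"
      using False by (simp add: map_bind_pmf map_pmf_comp)
    also have "\<dots> = map_pmf (\<lambda>r. r i) (rowK g n)" by (simp add: map_pmf_def)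
    finally show ?thesis using Suc.IH[OF \<open>i \<in> {1..n}\<close>] by simp
  qed
qed


lemma E_abs_le:
  fixes f :: "'a \<Rightarrow> real"
  assumes "finite (set_pmf p)"
  shows "\<bar>measure_pmf.expectation p f\<bar> \<le> measure_pmf.expectation p (\<lambda>x. \<bar>f x\<bar>)"
proof -
  have "measure_pmf.expectation p f \<le> measure_pmf.expectation p (\<lambda>x. \<bar>f x\<bar>)"
    by (rule E_mono[OF assms]) simp
  moreover have "- measure_pmf.expectation p f \<le> measure_pmf.expectation p (\<lambda>x. \<bar>f x\<bar>)"
  proof -
    have "measure_pmf.expectation p (\<lambda>x. (-1) * f x) \<le> measure_pmf.expectation p (\<lambda>x. \<bar>f x\<bar>)"
      by (rule E_mono[OF assms]) simp
    then show ?thesis unfolding E_cmult[OF assms] by simp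
  qed
  ultimately show ?thesis by linarith
qed

lemma E_abs_sqrt:
  fixes f :: "'a \<Rightarrow> real"
  assumes "finite (set_pmf p)"
  shows "measure_pmf.expectation p (\<lambda>x. \<bar>f x\<bar>) \<le> sqrt (measure_pmf.expectation p (\<lambda>x. (f x)^2))"
proof -
  have "(measure_pmf.expectation p (\<lambda>x. \<bar>f x\<bar>))^2 \<le> measure_pmf.expectation p (\<lambda>x. \<bar>f x\<bar>^2)"
    by (rule E_sq[OF assms])
  then have "(measure_pmf.expectation p (\<lambda>x. \<bar>f x\<bar>))^2 \<le> measure_pmf.expectation p (\<lambda>x. (f x)^2)"
    by simp
  then show ?thesis using real_le_rsqrt by blast
qed

lemma exists_from_E:
  fixes f :: "'a \<Rightarrow> real"
  assumes fin: "finite (set_pmf p)" and E: "B \<le> measure_pmf.expectation p f"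
  shows "\<exists>x\<in>set_pmf p. B \<le> f x"
proof (rule ccontr)
  assume "\<not> ?thesis"
  then have lt: "\<And>x. x \<in> set_pmf p \<Longrightarrow> f x < B" by auto
  have "(\<Sum>x\<in>set_pmf p. pmf p x * f x) < (\<Sum>x\<in>set_pmf p. pmf p x * B)"
    by (rule sum_strict_mono[OF fin set_pmf_not_empty]) (auto simp: lt pmf_positive)
  also have "\<dots> = B" using sum_pmf_eq_1[OF fin] by (simp add: sum_distrib_right[symmetric])
  finally show False using E unfolding E_sum[OF fin] by simp
qed

locale kanal =
  fixes A :: bandit_learner and K :: nat and eps :: "nat \<Rightarrow> real" and k :: nat and th :: real and M :: nat
  assumes valid: "valid_bandit_learner K A" and kK: "k \<in> {1..K}" and epsk: "eps k > 0"
    and th0: "0 \<le> th" and th1: "th \<le> 1"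
begin

definition g0 :: "nat \<Rightarrow> real pmf" where "g0 j = coin (eps j)"
definition gk :: "nat \<Rightarrow> real pmf" where "gk j = (if j = k then bcoin (eps k) th else coin (eps j))"
definition F0 :: "nat \<Rightarrow> (nat \<times> real) list \<Rightarrow> nat \<Rightarrow> real pmf" where "F0 s h i = g0 i"
definition Fk :: "nat \<Rightarrow> (nat \<times> real) list \<Rightarrow> nat \<Rightarrow> real pmf" where "Fk s h i = gk i"
definition Fp :: "nat \<Rightarrow> (nat \<times> real) list \<Rightarrow> nat \<Rightarrow> real pmf" where
  "Fp s h i = (if i = k \<and> cnt k h < M then bcoin (eps k) th else g0 i)"
definition rho :: "(nat \<times> real) list \<Rightarrow> nat \<times> real \<Rightarrow> real" where
  "rho u x = (if fst x = k \<and> cnt k u < M then 1 - th * snd x / eps k else 1)"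
definition Lr :: "(nat \<times> real) list \<Rightarrow> real" where
  "Lr h = (\<Prod>s<length h. rho (take s h) (h!s))"
definition q :: real where "q = 1 + th^2"

lemma finA: "finite (set_pmf (A h))" by (rule valid_bandit_fin[OF valid])
lemma finF0: "finite (set_pmf (F0 s h i))" unfolding F0_def g0_def by (rule coin_fin)
lemma finFk: "finite (set_pmf (Fk s h i))" unfolding Fk_def gk_def by (simp add: coin_fin bcoin_fin)
lemma finFp: "finite (set_pmf (Fp s h i))" unfolding Fp_def g0_def by (simp add: coin_fin bcoin_fin)
lemma fin0: "finite (set_pmf (proc A F0 t))" by (rule proc_fin[OF finA finF0])
lemma fink: "finite (set_pmf (proc A Fk t))" by (rule proc_fin[OF finA finFk])
lemma finp: "finite (set_pmf (proc A Fp t))" by (rule proc_fin[OF finA finFp])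

lemma Lr_snoc: "Lr (h @ [x]) = Lr h * rho h x"
proof -
  have "Lr (h @ [x]) = (\<Prod>s<Suc (length h). rho (take s (h @ [x])) ((h @ [x]) ! s))"
    unfolding Lr_def by simp
  also have "\<dots> = (\<Prod>s<length h. rho (take s (h @ [x])) ((h @ [x]) ! s)) * rho h x"
    by (simp add: prod.lessThan_Suc)
  also have "(\<Prod>s<length h. rho (take s (h @ [x])) ((h @ [x]) ! s)) = Lr h"
    unfolding Lr_def by (intro prod.cong) (auto simp: nth_append)
  finally show ?thesis .
qed

lemma one_step: "measure_pmf.expectation (Fp s u i) \<phi> = measure_pmf.expectation (F0 s u i) (\<lambda>y. rho u (i, y) * \<phi> y)"
proof (cases "i = k \<and> cnt k u < M")
  case True
  then show ?thesis using epsk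
    by (simp add: Fp_def F0_def g0_def rho_def E_bcoin[OF th0 th1] E_coin field_simps)
next
  case False
  then have "rho u (i,y) = 1" for y by (auto simp: rho_def)
  moreover have "Fp s u i = g0 i" using False by (auto simp: Fp_def)
  ultimately show ?thesis by (simp add: F0_def)
qed

lemma com: "measure_pmf.expectation (proc A Fp t) f = measure_pmf.expectation (proc A F0 t) (\<lambda>h. Lr h * f h)"
proof (induction t arbitrary: f)
  case 0 then show ?case by (simp add: Lr_def)
next
  case (Suc t)
  have "measure_pmf.expectation (proc A Fp (Suc t)) f
     = measure_pmf.expectation (proc A Fp t) (\<lambda>h. measure_pmf.expectation (A h) (\<lambda>i.
          measure_pmf.expectation (Fp (Suc t) h i) (\<lambda>y. f (h @ [(i,y)]))))"
    by (rule E_proc_step[OF finA finFp])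
  also have "\<dots> = measure_pmf.expectation (proc A F0 t) (\<lambda>h. Lr h * measure_pmf.expectation (A h) (\<lambda>i.
          measure_pmf.expectation (Fp (Suc t) h i) (\<lambda>y. f (h @ [(i,y)]))))"
    by (rule Suc.IH)
  also have "\<dots> = measure_pmf.expectation (proc A F0 t) (\<lambda>h. measure_pmf.expectation (A h) (\<lambda>i.
          measure_pmf.expectation (F0 (Suc t) h i) (\<lambda>y. Lr (h @ [(i,y)]) * f (h @ [(i,y)]))))"
  proof (rule E_cong[OF fin0])
    fix h
    have "Lr h * measure_pmf.expectation (A h) (\<lambda>i. measure_pmf.expectation (Fp (Suc t) h i) (\<lambda>y. f (h @ [(i,y)])))
       = measure_pmf.expectation (A h) (\<lambda>i. Lr h * measure_pmf.expectation (Fp (Suc t) h i) (\<lambda>y. f (h @ [(i,y)])))"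
      by (rule E_cmult[OF finA, symmetric])
    also have "\<dots> = measure_pmf.expectation (A h) (\<lambda>i. measure_pmf.expectation (F0 (Suc t) h i) (\<lambda>y. Lr (h @ [(i,y)]) * f (h @ [(i,y)])))"
    proof (rule E_cong[OF finA])
      fix i
      have "Lr h * measure_pmf.expectation (Fp (Suc t) h i) (\<lambda>y. f (h @ [(i,y)]))
         = Lr h * measure_pmf.expectation (F0 (Suc t) h i) (\<lambda>y. rho h (i, y) * f (h @ [(i,y)]))"
        by (simp add: one_step)
      also have "\<dots> = measure_pmf.expectation (F0 (Suc t) h i) (\<lambda>y. Lr h * (rho h (i, y) * f (h @ [(i,y)])))"
        by (rule E_cmult[OF finF0, symmetric])
      also have "\<dots> = measure_pmf.expectation (F0 (Suc t) h i) (\<lambda>y. Lr (h @ [(i,y)]) * f (h @ [(i,y)]))"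
        by (simp add: Lr_snoc mult.assoc)
      finally show "Lr h * measure_pmf.expectation (Fp (Suc t) h i) (\<lambda>y. f (h @ [(i,y)])) = \<dots>" .
    qed
    finally show "Lr h * measure_pmf.expectation (A h) (\<lambda>i. measure_pmf.expectation (Fp (Suc t) h i) (\<lambda>y. f (h @ [(i,y)])))
       = measure_pmf.expectation (A h) (\<lambda>i. measure_pmf.expectation (F0 (Suc t) h i) (\<lambda>y. Lr (h @ [(i,y)]) * f (h @ [(i,y)])))" .
  qed
  also have "\<dots> = measure_pmf.expectation (proc A F0 (Suc t)) (\<lambda>h. Lr h * f h)"
    by (rule E_proc_step[OF finA finF0, symmetric])
  finally show ?case .
qed

lemma EL: "measure_pmf.expectation (proc A F0 t) Lr = 1"
  using com[of t "\<lambda>_. 1"] by simp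

lemma mart: "measure_pmf.expectation (proc A F0 t) (\<lambda>h. (Lr h)^2 * q ^ (M - min (cnt k h) M)) = q ^ M"
proof (induction t)
  case 0 then show ?case by (simp add: Lr_def cnt_def)
next
  case (Suc t)
  have "measure_pmf.expectation (proc A F0 (Suc t)) (\<lambda>h. (Lr h)^2 * q ^ (M - min (cnt k h) M))
     = measure_pmf.expectation (proc A F0 t) (\<lambda>h. measure_pmf.expectation (A h) (\<lambda>i.
          measure_pmf.expectation (F0 (Suc t) h i) (\<lambda>y. (Lr (h @ [(i,y)]))^2 * q ^ (M - min (cnt k (h @ [(i,y)])) M))))"
    by (rule E_proc_step[OF finA finF0])
  also have "\<dots> = measure_pmf.expectation (proc A F0 t) (\<lambda>h. (Lr h)^2 * q ^ (M - min (cnt k h) M))"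
  proof (rule E_cong[OF fin0])
    fix h
    have inner: "measure_pmf.expectation (F0 (Suc t) h i) (\<lambda>y. (Lr (h @ [(i,y)]))^2 * q ^ (M - min (cnt k (h @ [(i,y)])) M))
        = (Lr h)^2 * q ^ (M - min (cnt k h) M)" for i
    proof (cases "i = k \<and> cnt k h < M")
      case True
      then have i: "i = k" and c: "cnt k h < M" by auto
      have pw: "M - min (cnt k h) M = Suc (M - min (cnt k (h @ [(i,y)])) M)" for y
        using c i by (simp add: cnt_snoc)
      have "measure_pmf.expectation (F0 (Suc t) h i) (\<lambda>y. (Lr (h @ [(i,y)]))^2 * q ^ (M - min (cnt k (h @ [(i,y)])) M))
         = (Lr h)^2 * q ^ (M - min (cnt k h) M - 1) * (((1 - th * eps k / eps k)^2 + (1 - th * (- eps k) / eps k)^2) / 2)"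
        using c i apply (simp add: F0_def g0_def E_coin Lr_snoc rho_def cnt_snoc power_mult_distrib algebra_simps add_divide_distrib)
        by (simp add: power2_eq_square algebra_simps)
      also have "((1 - th * eps k / eps k)^2 + (1 - th * (- eps k) / eps k)^2) / 2 = q"
        using epsk by (simp add: q_def power2_eq_square field_simps)
      also have "(Lr h)^2 * q ^ (M - min (cnt k h) M - 1) * q = (Lr h)^2 * q ^ (M - min (cnt k h) M)"
      proof -
        have e: "M - min (cnt k h) M = Suc (M - min (cnt k h) M - 1)" using c by simp
        have "q ^ (M - min (cnt k h) M) = q ^ (M - min (cnt k h) M - 1) * q"
          by (subst e) (simp add: mult.commute)
        then show ?thesis by (simp add: mult.assoc)
      qed
      finally show ?thesis .
    next
      case False
      then have "(Lr (h @ [(i,y)]))^2 * q ^ (M - min (cnt k (h @ [(i,y)])) M) = (Lr h)^2 * q ^ (M - min (cnt k h) M)" for y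
        by (auto simp: Lr_snoc rho_def cnt_snoc)
      then show ?thesis by simp
    qed
    show "measure_pmf.expectation (A h) (\<lambda>i. measure_pmf.expectation (F0 (Suc t) h i)
         (\<lambda>y. (Lr (h @ [(i,y)]))^2 * q ^ (M - min (cnt k (h @ [(i,y)])) M))) = (Lr h)^2 * q ^ (M - min (cnt k h) M)"
      by (simp add: inner)
  qed
  also have "\<dots> = q ^ M" by (rule Suc.IH)
  finally show ?case .
qed

lemma chi: "measure_pmf.expectation (proc A F0 t) (\<lambda>h. (Lr h - 1)^2) \<le> q ^ M - 1"
proof -
  have q1: "q \<ge> 1" by (simp add: q_def)
  have "measure_pmf.expectation (proc A F0 t) (\<lambda>h. (Lr h)^2) \<le> measure_pmf.expectation (proc A F0 t) (\<lambda>h. (Lr h)^2 * q ^ (M - min (cnt k h) M))"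
    by (rule E_mono[OF fin0]) (use q1 in \<open>simp add: mult_le_cancel_left1 one_le_power\<close>)
  then have L2: "measure_pmf.expectation (proc A F0 t) (\<lambda>h. (Lr h)^2) \<le> q ^ M" using mart by simp
  have "measure_pmf.expectation (proc A F0 t) (\<lambda>h. (Lr h - 1)^2)
     = measure_pmf.expectation (proc A F0 t) (\<lambda>h. ((Lr h)^2 + (-2) * Lr h) + 1)"
    by (simp add: power2_eq_square algebra_simps)
  also have "\<dots> = measure_pmf.expectation (proc A F0 t) (\<lambda>h. (Lr h)^2) + (-2) * measure_pmf.expectation (proc A F0 t) Lr + 1"
    by (simp only: E_add[OF fin0] E_cmult[OF fin0] E_const)
  finally show ?thesis using L2 EL by simp
qed

lemma tv:
  assumes B: "B \<ge> 0" and bnd: "\<And>h. h \<in> set_pmf (proc A F0 t) \<Longrightarrow> \<bar>f h\<bar> \<le> B"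
  shows "\<bar>measure_pmf.expectation (proc A Fp t) f - measure_pmf.expectation (proc A F0 t) f\<bar> \<le> B * sqrt (q ^ M - 1)"
proof -
  have "measure_pmf.expectation (proc A Fp t) f - measure_pmf.expectation (proc A F0 t) f
      = measure_pmf.expectation (proc A F0 t) (\<lambda>h. (Lr h - 1) * f h)"
    unfolding com by (simp add: E_diff[OF fin0, symmetric] algebra_simps)
  then have "\<bar>measure_pmf.expectation (proc A Fp t) f - measure_pmf.expectation (proc A F0 t) f\<bar>
      \<le> measure_pmf.expectation (proc A F0 t) (\<lambda>h. \<bar>(Lr h - 1) * f h\<bar>)"
    using E_abs_le[OF fin0] by simp
  also have "\<dots> \<le> measure_pmf.expectation (proc A F0 t) (\<lambda>h. B * \<bar>Lr h - 1\<bar>)"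
  proof (rule E_mono[OF fin0])
    fix h assume "h \<in> set_pmf (proc A F0 t)"
    then have "\<bar>f h\<bar> \<le> B" by (rule bnd)
    then have "\<bar>Lr h - 1\<bar> * \<bar>f h\<bar> \<le> \<bar>Lr h - 1\<bar> * B" by (intro mult_left_mono) auto
    then show "\<bar>(Lr h - 1) * f h\<bar> \<le> B * \<bar>Lr h - 1\<bar>" by (simp add: abs_mult mult.commute)
  qed
  also have "\<dots> = B * measure_pmf.expectation (proc A F0 t) (\<lambda>h. \<bar>Lr h - 1\<bar>)"
    by (rule E_cmult[OF fin0])
  also have "\<dots> \<le> B * sqrt (measure_pmf.expectation (proc A F0 t) (\<lambda>h. (Lr h - 1)^2))"
    by (intro mult_left_mono E_abs_sqrt[OF fin0] B)
  also have "\<dots> \<le> B * sqrt (q ^ M - 1)"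
    by (intro mult_left_mono real_sqrt_le_mono chi B)
  finally show ?thesis .
qed

lemma gk_fin: "finite (set_pmf (gk j))" unfolding gk_def by (simp add: coin_fin bcoin_fin)

lemma trunc_E: "measure_pmf.expectation (proc A Fk t) (\<lambda>h. real (min (cnt k h) M))
   = measure_pmf.expectation (proc A Fp t) (\<lambda>h. real (min (cnt k h) M))"
proof -
  have eq: "map_pmf (trunc k M) (proc A Fk t) = map_pmf (trunc k M) (proc A Fp t)"
    by (rule map_trunc_eq) (simp add: Fk_def Fp_def gk_def g0_def)
  have "measure_pmf.expectation (proc A Fk t) (\<lambda>h. real (min (cnt k h) M))
     = measure_pmf.expectation (map_pmf (trunc k M) (proc A Fk t)) (\<lambda>u. real (cnt k u))"
    by (simp add: cnt_trunc)
  also have "\<dots> = measure_pmf.expectation (map_pmf (trunc k M) (proc A Fp t)) (\<lambda>u. real (cnt k u))"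
    by (simp only: eq)
  also have "\<dots> = measure_pmf.expectation (proc A Fp t) (\<lambda>h. real (min (cnt k h) M))"
    by (simp add: cnt_trunc)
  finally show ?thesis .
qed

lemma main_k:
  assumes M1: "1 \<le> M" and MT: "M \<le> T"
  shows "measure_pmf.expectation (proc A Fk T) (\<lambda>h. real (cnt k h))
     \<le> (T / M) * measure_pmf.expectation (proc A F0 T) (\<lambda>h. real (cnt k h)) + T * sqrt (q ^ M - 1)"
proof -
  have Mpos: "real M > 0" using M1 by simp
  have TM: "real T / real M \<ge> 1" using MT Mpos by simp
  have "measure_pmf.expectation (proc A Fk T) (\<lambda>h. real (cnt k h))
      \<le> measure_pmf.expectation (proc A Fk T) (\<lambda>h. (T / M) * real (min (cnt k h) M))"
  proof (rule E_mono[OF fink])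
    fix h assume "h \<in> set_pmf (proc A Fk T)"
    then have "cnt k h \<le> T" using cnt_le[of k h] proc_len by metis
    show "real (cnt k h) \<le> (T / M) * real (min (cnt k h) M)"
    proof (cases "cnt k h \<le> M")
      case True
      then show ?thesis using TM mult_right_mono[OF TM, of "real (cnt k h)"] by simp
    next
      case False
      then show ?thesis using Mpos \<open>cnt k h \<le> T\<close> by simp
    qed
  qed
  also have "\<dots> = (T / M) * measure_pmf.expectation (proc A Fp T) (\<lambda>h. real (min (cnt k h) M))"
    by (simp only: E_cmult[OF fink] trunc_E)
  also have "\<dots> \<le> (T / M) * (measure_pmf.expectation (proc A F0 T) (\<lambda>h. real (min (cnt k h) M)) + M * sqrt (q ^ M - 1))"
  proof (rule mult_left_mono)
    have "\<bar>measure_pmf.expectation (proc A Fp T) (\<lambda>h. real (min (cnt k h) M)) - measure_pmf.expectation (proc A F0 T) (\<lambda>h. real (min (cnt k h) M))\<bar>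
       \<le> M * sqrt (q ^ M - 1)"
      by (rule tv) auto
    then show "measure_pmf.expectation (proc A Fp T) (\<lambda>h. real (min (cnt k h) M)) \<le> measure_pmf.expectation (proc A F0 T) (\<lambda>h. real (min (cnt k h) M)) + M * sqrt (q ^ M - 1)"
      by linarith
  qed simp
  also have "\<dots> \<le> (T / M) * (measure_pmf.expectation (proc A F0 T) (\<lambda>h. real (cnt k h)) + M * sqrt (q ^ M - 1))"
    by (intro mult_left_mono add_right_mono E_mono[OF fin0]) auto
  also have "\<dots> = (T / M) * measure_pmf.expectation (proc A F0 T) (\<lambda>h. real (cnt k h)) + T * sqrt (q ^ M - 1)"
    using Mpos by (simp add: field_simps)
  finally show ?thesis .
qed

lemma regret_k:
  "measure_pmf.expectation (prior (\<lambda>s. rowK gk K) T) (\<lambda>l. bandit_exp_loss A l T - best_arm_loss K l T)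
     \<ge> th * eps k * (T - measure_pmf.expectation (proc A Fk T) (\<lambda>h. real (cnt k h)))"
proof -
  let ?p = "prior (\<lambda>s. rowK gk K) T"
  have finR: "finite (set_pmf (rowK gk K))" by (rule rowK_fin[OF gk_fin])
  have fin: "finite (set_pmf ?p)" by (rule prior_fin[OF finR])
  have pc: "proc A (\<lambda>s h i. map_pmf (\<lambda>r. r i) (rowK gk K)) T = proc A Fk T"
  proof (rule proc_cong)
    fix s h i assume "i \<in> set_pmf (A h)"
    then have "i \<in> {1..K}" using valid unfolding valid_bandit_learner_def by blast
    then show "map_pmf (\<lambda>r. r i) (rowK gk K) = Fk s h i" by (simp add: rowK_marg Fk_def)
  qed
  have meank: "measure_pmf.expectation (gk i) (\<lambda>y. y) = (if i = k then - (th * eps k) else 0)" for i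
    by (simp add: gk_def E_bcoin[OF th0 th1] E_coin field_simps)
  have "measure_pmf.expectation ?p (\<lambda>l. bandit_exp_loss A l T)
      = measure_pmf.expectation (proc A Fk T) (\<lambda>h. \<Sum>s<length h. snd (h ! s))"
    unfolding E_bandit_prior[OF valid finR] pc ..
  also have "\<dots> = measure_pmf.expectation (proc A Fk T) (\<lambda>h. \<Sum>s<length h. (\<lambda>i. if i = k then - (th * eps k) else 0) (fst (h ! s)))"
    by (rule E_proc_add[where g="\<lambda>i y. y", OF finA finFk]) (simp add: Fk_def meank)
  also have "\<dots> = measure_pmf.expectation (proc A Fk T) (\<lambda>h. (- (th * eps k)) * real (cnt k h))"
    by (simp only: sum_cnt)
  also have "\<dots> = - (th * eps k) * measure_pmf.expectation (proc A Fk T) (\<lambda>h. real (cnt k h))"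
    by (rule E_cmult[OF fink])
  finally have l1: "measure_pmf.expectation ?p (\<lambda>l. bandit_exp_loss A l T) = - (th * eps k) * measure_pmf.expectation (proc A Fk T) (\<lambda>h. real (cnt k h))" .
  have "measure_pmf.expectation ?p (\<lambda>l. best_arm_loss K l T) \<le> measure_pmf.expectation ?p (\<lambda>l. \<Sum>t=1..T. l t k)"
    by (rule E_mono[OF fin best_le[OF kK]])
  also have "\<dots> = real T * (- (th * eps k))"
  proof (rule prior_lin[OF finR])
    fix s :: nat
    have "measure_pmf.expectation (rowK gk K) (\<lambda>r. r k) = measure_pmf.expectation (map_pmf (\<lambda>r. r k) (rowK gk K)) (\<lambda>y. y)"
      by simp
    also have "\<dots> = - (th * eps k)" using kK by (simp add: rowK_marg meank)
    finally show "measure_pmf.expectation (rowK gk K) (\<lambda>r. r k) = - (th * eps k)" .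
  qed
  finally have l2: "measure_pmf.expectation ?p (\<lambda>l. best_arm_loss K l T) \<le> real T * (- (th * eps k))" .
  show ?thesis using l1 l2 E_diff[OF fin, of "\<lambda>l. bandit_exp_loss A l T" "\<lambda>l. best_arm_loss K l T"]
    by (simp add: algebra_simps)
qed

lemma final_k_exists:
  assumes M1: "1 \<le> M" and MT: "M \<le> T"
  shows "\<exists>l. (\<forall>t\<in>{1..T}. \<forall>j\<in>{1..K}. \<bar>l t j\<bar> \<le> \<bar>eps j\<bar>) \<and>
     bandit_exp_loss A l T - best_arm_loss K l T \<ge> th * eps k * (T - ((T / M) *
        measure_pmf.expectation (proc A (\<lambda>s h i. coin (eps i)) T) (\<lambda>h. real (cnt k h)) + T * sqrt ((1 + th^2) ^ M - 1)))"
proof -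
  let ?p = "prior (\<lambda>s. rowK gk K) T"
  let ?B = "th * eps k * (T - ((T / M) *
        measure_pmf.expectation (proc A (\<lambda>s h i. coin (eps i)) T) (\<lambda>h. real (cnt k h)) + T * sqrt ((1 + th^2) ^ M - 1)))"
  have finR: "finite (set_pmf (rowK gk K))" by (rule rowK_fin[OF gk_fin])
  have fin: "finite (set_pmf ?p)" by (rule prior_fin[OF finR])
  have F0e: "proc A F0 T = proc A (\<lambda>s h i. coin (eps i)) T"
  proof -
    have "F0 = (\<lambda>s h i. coin (eps i))" by (simp add: fun_eq_iff F0_def g0_def)
    then show ?thesis by simp
  qed
  have "?B \<le> th * eps k * (T - measure_pmf.expectation (proc A Fk T) (\<lambda>h. real (cnt k h)))"
    using main_k[OF M1 MT] th0 epsk unfolding F0e q_def by (intro mult_left_mono) auto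
  also have "\<dots> \<le> measure_pmf.expectation ?p (\<lambda>l. bandit_exp_loss A l T - best_arm_loss K l T)"
    by (rule regret_k)
  finally have E: "?B \<le> measure_pmf.expectation ?p (\<lambda>l. bandit_exp_loss A l T - best_arm_loss K l T)" .
  obtain l where l: "l \<in> set_pmf ?p" "?B \<le> bandit_exp_loss A l T - best_arm_loss K l T"
    using exists_from_E[OF fin E] by blast
  have "\<forall>t\<in>{1..T}. \<forall>j\<in>{1..K}. \<bar>l t j\<bar> \<le> \<bar>eps j\<bar>"
  proof (intro ballI)
    fix t j assume t: "t \<in> {1..T}" and j: "j \<in> {1..K}"
    have "l t j \<in> set_pmf (gk j)" using rowK_supp[OF prior_supp[OF l(1) t] j] .
    then show "\<bar>l t j\<bar> \<le> \<bar>eps j\<bar>"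
      by (cases "j = k") (auto simp: gk_def dest: coin_supp bcoin_supp)
  qed
  then show ?thesis using l(2) by blast
qed

end


lemma pow_bound:
  fixes x :: real
  assumes x0: "0 \<le> x" and Mx: "real M * x < 1"
  shows "(1 + x) ^ M \<le> 1 / (1 - real M * x)"
proof (cases "M = 0")
  case True then show ?thesis by simp
next
  case False
  then have "1 \<le> real M" by simp
  then have "x \<le> real M * x" using mult_right_mono[OF \<open>1 \<le> real M\<close> x0] by simp
  then have "x < 1" using Mx by linarith
  have b: "1 + real M * (-x) \<le> (1 + (-x)) ^ M"
    by (rule Bernoulli_inequality) (use \<open>x < 1\<close> in simp)
  have "(1 + x) ^ M * (1 - x) ^ M = (1 - x^2) ^ M" by (simp add: power_mult_distrib[symmetric] algebra_simps power2_eq_square)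
  also have "\<dots> \<le> 1" using x0 \<open>x < 1\<close> by (intro power_le_one) (auto simp: power2_eq_square mult_le_one)
  finally have p: "(1 + x) ^ M * (1 - x) ^ M \<le> 1" .
  have pos: "1 - real M * x > 0" using Mx by simp
  have "(1 + x) ^ M * (1 - real M * x) \<le> (1 + x) ^ M * (1 - x) ^ M"
    using b x0 by (intro mult_left_mono) auto
  with p have "(1 + x) ^ M * (1 - real M * x) \<le> 1" by linarith
  then show ?thesis using pos by (simp add: field_simps)
qed

lemma E_setsum:
  fixes f :: "'k \<Rightarrow> 'a \<Rightarrow> real"
  assumes "finite (set_pmf p)"
  shows "measure_pmf.expectation p (\<lambda>x. \<Sum>k\<in>J. f k x) = (\<Sum>k\<in>J. measure_pmf.expectation p (f k))"
  unfolding E_sum[OF assms] by (simp add: sum_distrib_left sum.swap[of _ J])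

lemma argmax_weighted:
  fixes w b :: "'k \<Rightarrow> real"
  assumes "finite J" "J \<noteq> {}" "\<And>k. k \<in> J \<Longrightarrow> w k \<ge> 0" "(\<Sum>k\<in>J. w k) = 1"
  shows "\<exists>k\<in>J. (\<Sum>j\<in>J. w j * b j) \<le> b k"
proof -
  have "Max (b ` J) \<in> b ` J" using assms(1,2) by (intro Max_in) auto
  then obtain k where k: "k \<in> J" "b k = Max (b ` J)" by auto
  have "(\<Sum>j\<in>J. w j * b j) \<le> (\<Sum>j\<in>J. w j * b k)"
    using assms(1,3) k by (intro sum_mono mult_left_mono) auto
  also have "\<dots> = b k" using assms(4) by (simp add: sum_distrib_right[symmetric])
  finally show ?thesis using k(1) by blast
qed


lemma nat_floor_bounds:
  fixes x :: real
  assumes "0 \<le> x"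
  shows "real (nat \<lfloor>x\<rfloor>) \<le> x" "x - 1 < real (nat \<lfloor>x\<rfloor>)"
proof -
  have "\<lfloor>x\<rfloor> \<ge> 0" using assms by simp
  then have e: "real (nat \<lfloor>x\<rfloor>) = real_of_int \<lfloor>x\<rfloor>" by simp
  show "real (nat \<lfloor>x\<rfloor>) \<le> x" unfolding e by simp
  show "x - 1 < real (nat \<lfloor>x\<rfloor>)" unfolding e using floor_correct[of x] by simp
qed

lemma caseB:
  fixes A :: bandit_learner and K T :: nat and eps :: "nat \<Rightarrow> real"
  assumes valid: "valid_bandit_learner K A" and T0: "T > 0"
    and nonneg: "\<forall>j\<in>{1..K}. eps j \<ge> 0"
    and Spos: "(\<Sum>j=1..K. eps j^2) > 0"
    and cond: "\<forall>j\<in>{1..K}. eps j > 0 \<longrightarrow> eps j ^ 2 \<ge> 2 / real T * (\<Sum>i=1..K. eps i ^ 2)"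
    and small: "\<forall>j\<in>{1..K}. 8 * eps j ^ 2 < (\<Sum>i=1..K. eps i ^ 2)"
  shows "\<exists>l. (\<forall>t\<in>{1..T}. \<forall>j\<in>{1..K}. \<bar>l t j\<bar> \<le> eps j) \<and>
    bandit_exp_loss A l T - best_arm_loss K l T \<ge> 5/12 * sqrt ((\<Sum>i=1..K. eps i ^ 2) / (128 * T)) * T"
proof -
  define S where "S = (\<Sum>j=1..K. eps j^2)"
  define J where "J = {j\<in>{1..K}. eps j > 0}"
  define D where "D = sqrt (S / (128 * T))"
  define th where "th k = D / eps k" for k
  define M where "M k = nat \<lfloor>8 * T * eps k^2 / S\<rfloor>" for k
  define c where "c k = measure_pmf.expectation (proc A (\<lambda>s h i. coin (eps i)) T) (\<lambda>h. real (cnt k h))" for k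
  define b where "b k = D * (T - ((T / M k) * c k + T / 3))" for k
  define w where "w k = eps k ^ 2 / S" for k
  have S0: "S > 0" using Spos S_def by simp
  have Tp: "real T > 0" using T0 by simp
  have D0: "D \<ge> 0" unfolding D_def using S0 by simp
  have D2: "D^2 = S / (128 * T)" unfolding D_def using S0 Tp by simp
  have finJ: "finite J" unfolding J_def by simp
  have JK: "J \<subseteq> {1..K}" unfolding J_def by auto
  have SJ: "(\<Sum>k\<in>J. eps k^2) = S"
    unfolding S_def using nonneg JK
    by (intro sum.mono_neutral_left) (auto simp: J_def order.order_iff_strict)
  have Jne: "J \<noteq> {}" using SJ S0 by auto
  have finP: "finite (set_pmf (proc A (\<lambda>s h i. coin (eps i)) T))"
    by (rule proc_fin[OF valid_bandit_fin[OF valid] coin_fin])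
  have c0: "c k \<ge> 0" for k unfolding c_def by (rule Bochner_Integration.integral_nonneg) auto
  have csum: "(\<Sum>k\<in>J. c k) \<le> T"
  proof -
    have "(\<Sum>k\<in>J. c k) = measure_pmf.expectation (proc A (\<lambda>s h i. coin (eps i)) T) (\<lambda>h. \<Sum>k\<in>J. real (cnt k h))"
      unfolding c_def by (rule E_setsum[OF finP, symmetric])
    also have "\<dots> \<le> measure_pmf.expectation (proc A (\<lambda>s h i. coin (eps i)) T) (\<lambda>h. real T)"
    proof (rule E_mono[OF finP])
      fix h assume "h \<in> set_pmf (proc A (\<lambda>s h i. coin (eps i)) T)"
      then have "length h = T" by (rule proc_len)
      then show "(\<Sum>k\<in>J. real (cnt k h)) \<le> real T"
        using sum_cnt_le[OF finJ, of h] by (simp flip: of_nat_sum)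
    qed
    finally show ?thesis by simp
  qed
  have wsum: "(\<Sum>k\<in>J. w k) = 1" unfolding w_def using SJ S0 by (simp add: sum_divide_distrib[symmetric])
  have facts: "1 \<le> M k \<and> M k \<le> T \<and> 0 \<le> th k \<and> th k \<le> 1 \<and> th k * eps k = D \<and>
      sqrt ((1 + (th k)^2) ^ (M k) - 1) \<le> 1/3 \<and> w k * (T / M k) \<le> 1/4" if k: "k \<in> J" for k
  proof -
    have ek: "eps k > 0" using k unfolding J_def by auto
    have e2: "eps k ^ 2 \<ge> 2 / real T * S" using k cond unfolding J_def S_def by auto
    have sm: "8 * eps k ^ 2 < S" using k small unfolding J_def S_def by auto
    define x where "x = 8 * T * eps k^2 / S"
    have x0: "x \<ge> 0" unfolding x_def using S0 by simp
    have x16: "x \<ge> 16"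
    proof -
      have "2 * S \<le> T * eps k ^ 2" using e2 Tp by (simp add: field_simps)
      then show ?thesis unfolding x_def using S0 by (simp add: field_simps)
    qed
    have xT: "x < T" unfolding x_def using sm S0 Tp by (simp add: field_simps)
    have Mle: "real (M k) \<le> x" and Mgt: "x - 1 < real (M k)"
      unfolding M_def x_def[symmetric] using nat_floor_bounds[OF x0] by auto
    have M1: "1 \<le> M k" using Mgt x16 by linarith
    have MT: "M k \<le> T" using Mle xT by linarith
    have Mhalf: "real (M k) \<ge> x / 2" using Mgt x16 by linarith
    have thk: "th k \<ge> 0" unfolding th_def using D0 ek by simp
    have th2: "(th k)^2 = S / (128 * T * eps k^2)" unfolding th_def using D2 ek by (simp add: power_divide)
    have th2le: "(th k)^2 \<le> 1" 
    proof -
      have "S / (128 * T * eps k^2) \<le> 1"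
        using e2 S0 Tp ek by (simp add: field_simps)
      then show ?thesis using th2 by simp
    qed
    have th1: "th k \<le> 1" using th2le thk by (simp add: power_le_one_iff abs_le_square_iff)
    have thD: "th k * eps k = D" unfolding th_def using ek by simp
    have Mth: "real (M k) * (th k)^2 \<le> 1/16"
    proof -
      have "real (M k) * (th k)^2 \<le> x * (th k)^2" using Mle by (intro mult_right_mono) auto
      also have "x * (th k)^2 = 1/16" unfolding x_def th2 using S0 ek Tp by (simp add: field_simps)
      finally show ?thesis .
    qed
    have pb: "(1 + (th k)^2) ^ (M k) \<le> 1 / (1 - real (M k) * (th k)^2)"
      by (rule pow_bound) (use Mth in auto)
    also have "\<dots> \<le> 16 / 15" using Mth by (simp add: field_simps)
    finally have "(1 + (th k)^2) ^ (M k) \<le> 16/15" .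
    moreover have "(1/3::real)^2 = 1/9" by (simp add: power2_eq_square)
    ultimately have "(1 + (th k)^2) ^ (M k) - 1 \<le> (1/3)^2" by linarith
    then have "sqrt ((1 + (th k)^2) ^ (M k) - 1) \<le> sqrt ((1/3)^2)" by (rule real_sqrt_le_mono)
    then have sq: "sqrt ((1 + (th k)^2) ^ (M k) - 1) \<le> 1/3" by simp
    have wT: "w k * (T / M k) \<le> 1/4"
    proof -
      have "real T / real (M k) \<le> real T / (x / 2)"
        using Mhalf x16 Tp by (intro divide_left_mono) auto
      also have "\<dots> = S / (4 * eps k ^ 2)" unfolding x_def using S0 ek Tp by (simp add: field_simps)
      finally have "real T / real (M k) \<le> S / (4 * eps k ^ 2)" .
      then have "w k * (T / M k) \<le> w k * (S / (4 * eps k ^ 2))"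
        unfolding w_def using S0 by (intro mult_left_mono) auto
      also have "\<dots> = 1/4" unfolding w_def using S0 ek by (simp add: field_simps)
      finally show ?thesis .
    qed
    show ?thesis using M1 MT thk th1 thD sq wT by auto
  qed
  have "(\<Sum>k\<in>J. w k * b k) \<ge> 5/12 * D * T"
  proof -
    have pw: "w k * b k \<ge> w k * (D * T) - D * c k / 4 - w k * (D * T / 3)" if k: "k \<in> J" for k
    proof -
      have wk: "w k \<ge> 0" unfolding w_def using S0 by simp
      have "w k * b k = w k * (D * T) - D * (w k * (T / M k)) * c k - w k * (D * T / 3)"
        unfolding b_def by (simp add: algebra_simps)
      moreover have "D * (w k * (T / M k)) * c k \<le> D * (1/4) * c k"
        using facts[OF k] D0 c0[of k] by (intro mult_right_mono mult_left_mono) auto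
      ultimately show ?thesis by simp
    qed
    have "(\<Sum>k\<in>J. w k * b k) \<ge> (\<Sum>k\<in>J. w k * (D * T) - D * c k / 4 - w k * (D * T / 3))"
      using pw by (rule sum_mono)
    also have "(\<Sum>k\<in>J. w k * (D * T) - D * c k / 4 - w k * (D * T / 3)) = D * T - D / 4 * (\<Sum>k\<in>J. c k) - D * T / 3"
      by (simp add: sum_subtractf sum_distrib_right[symmetric] sum_distrib_left[symmetric] wsum sum_divide_distrib[symmetric])
    finally have "(\<Sum>k\<in>J. w k * b k) \<ge> D * T - D / 4 * (\<Sum>k\<in>J. c k) - D * T / 3" .
    moreover have "D / 4 * (\<Sum>k\<in>J. c k) \<le> D / 4 * T" using csum D0 by (intro mult_left_mono) auto
    ultimately show ?thesis by simp
  qed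
  moreover have wnn: "\<And>k. k \<in> J \<Longrightarrow> w k \<ge> 0" unfolding w_def using S0 by simp
  obtain k where k: "k \<in> J" and bk0: "(\<Sum>j\<in>J. w j * b j) \<le> b k"
    using argmax_weighted[OF finJ Jne wnn wsum, of b] by blast
  ultimately have bk: "5/12 * D * T \<le> b k" by linarith
  have kK: "k \<in> {1..K}" using k JK by auto
  have ek: "eps k > 0" using k unfolding J_def by auto
  note f = facts[OF k]
  interpret kanal A K eps k "th k" "M k"
    using valid kK ek f by unfold_locales auto
  obtain l where l: "\<forall>t\<in>{1..T}. \<forall>j\<in>{1..K}. \<bar>l t j\<bar> \<le> \<bar>eps j\<bar>"
     "bandit_exp_loss A l T - best_arm_loss K l T \<ge> th k * eps k * (T - ((T / M k) * c k + T * sqrt ((1 + (th k)^2) ^ (M k) - 1)))"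
    using final_k_exists f unfolding c_def by blast
  have "real T * sqrt ((1 + (th k)^2) ^ (M k) - 1) \<le> real T * (1/3)"
    using f Tp by (intro mult_left_mono) auto
  then have "b k \<le> D * (T - ((T / M k) * c k + T * sqrt ((1 + (th k)^2) ^ (M k) - 1)))"
    unfolding b_def using D0 by (intro mult_left_mono) auto
  then have "b k \<le> th k * eps k * (T - ((T / M k) * c k + T * sqrt ((1 + (th k)^2) ^ (M k) - 1)))"
    using f by simp
  then have R: "bandit_exp_loss A l T - best_arm_loss K l T \<ge> 5/12 * D * T" using l(2) bk by linarith
  have "\<forall>t\<in>{1..T}. \<forall>j\<in>{1..K}. \<bar>l t j\<bar> \<le> eps j" using l(1) nonneg by auto
  then show ?thesis using R unfolding D_def S_def by auto
qed


lemma c_sqrt: "0 \<le> (c::real) \<Longrightarrow> c * sqrt x = sqrt (c^2 * x)"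
  by (simp add: real_sqrt_mult)

lemma zero_bandit:
  assumes valid: "valid_bandit_learner K A" and K: "K \<ge> 1"
  shows "bandit_exp_loss A (\<lambda>_ _. 0) T - best_arm_loss K (\<lambda>_ _. 0) T = 0"
proof -
  have "bandit_exp_loss A (\<lambda>_ _. 0) T = measure_pmf.expectation (proc A (\<lambda>s h i. return_pmf 0) T) (\<lambda>h. \<Sum>s<length h. (\<lambda>_. 0) (fst (h!s)))"
    unfolding bandit_exp_loss_def bandit_hist_proc
    by (rule E_proc_add[where g="\<lambda>i y. y", OF valid_bandit_fin[OF valid]]) auto
  moreover have "best_arm_loss K (\<lambda>_ _. 0) T = 0"
    unfolding best_arm_loss_def using K by (simp add: image_constant_conv)
  ultimately show ?thesis by simp
qed

lemma zero_full:
  assumes valid: "valid_full_learner K A" and K: "K \<ge> 1"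
  shows "full_exp_loss A (\<lambda>_ _. 0) T - best_arm_loss K (\<lambda>_ _. 0) T = 0"
proof -
  have "full_exp_loss A (\<lambda>_ _. 0) T = measure_pmf.expectation (proc A (\<lambda>s h i. return_pmf (\<lambda>_. 0)) T) (\<lambda>h. \<Sum>s<length h. (\<lambda>_. 0) (fst (h!s)))"
    unfolding full_exp_loss_def full_hist_proc
    by (rule E_proc_add[where g="\<lambda>i y. y i", OF valid_full_fin[OF valid]]) auto
  moreover have "best_arm_loss K (\<lambda>_ _. 0) T = 0"
    unfolding best_arm_loss_def using K by (simp add: image_constant_conv)
  ultimately show ?thesis by simp
qed

lemma rw_exists:
  fixes R :: "(nat \<Rightarrow> nat \<Rightarrow> real) \<Rightarrow> real"
  assumes k: "k \<in> {1..K}" and e: "e > 0" and nn: "\<forall>j\<in>{1..K}. eps j \<ge> 0" and ek: "eps k = e"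
    and E: "B \<le> measure_pmf.expectation (prior (\<lambda>s. rw_row k e) T) R"
  shows "\<exists>l. (\<forall>t\<in>{1..T}. \<forall>j\<in>{1..K}. \<bar>l t j - 0\<bar> \<le> eps j) \<and> B \<le> R l"
proof -
  obtain l where l: "l \<in> set_pmf (prior (\<lambda>s. rw_row k e) T)" "B \<le> R l"
    using exists_from_E[OF prior_fin[OF rw_fin] E] by blast
  have "\<forall>t\<in>{1..T}. \<forall>j\<in>{1..K}. \<bar>l t j - 0\<bar> \<le> eps j"
  proof (intro ballI)
    fix t j assume t: "t \<in> {1..T}" and j: "j \<in> {1..K}"
    have r: "l t \<in> set_pmf (rw_row k e)" by (rule prior_supp[OF l(1) t])
    show "\<bar>l t j - 0\<bar> \<le> eps j"
    proof (cases "j = k")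
      case True then show ?thesis using rw_supp(2)[OF r] e ek by simp
    next
      case False then show ?thesis using rw_supp(1)[OF r False] nn j by simp
    qed
  qed
  then show ?thesis using l(2) by blast
qed

theorem theorem2:
  shows "\<exists>c::real. c > 0 \<and>
    (\<forall>(T::nat) (K::nat) (\<epsilon>::nat \<Rightarrow> real).
      T > 1 \<longrightarrow> K > 1 \<longrightarrow> (\<forall>j\<in>{1..K}. \<epsilon> j \<ge> 0) \<longrightarrow>
      (\<forall>j\<in>{1..K}. \<epsilon> j > 0 \<longrightarrow> \<epsilon> j ^ 2 \<ge> 2 / real T * (\<Sum>i=1..K. \<epsilon> i ^ 2)) \<longrightarrow>
      (\<exists>m::nat \<Rightarrow> real.
        (\<forall>A. valid_bandit_learner K A \<longrightarrow>
           (\<exists>l::nat \<Rightarrow> nat \<Rightarrow> real.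
              (\<forall>t\<in>{1..T}. \<forall>j\<in>{1..K}. \<bar>l t j - m j\<bar> \<le> \<epsilon> j) \<and>
              bandit_exp_loss A l T - best_arm_loss K l T
                \<ge> c * sqrt (real T * (\<Sum>j=1..K. \<epsilon> j ^ 2)))) \<and>
        (\<forall>A. valid_full_learner K A \<longrightarrow>
           (\<exists>l::nat \<Rightarrow> nat \<Rightarrow> real.
              (\<forall>t\<in>{1..T}. \<forall>j\<in>{1..K}. \<bar>l t j - m j\<bar> \<le> \<epsilon> j) \<and>
              full_exp_loss A l T - best_arm_loss K l T
                \<ge> c * sqrt (real T * (MAX j\<in>{1..K}. \<epsilon> j ^ 2))))))"
proof (intro exI[of _ "1/30"] conjI allI impI)
  show "(1/30::real) > 0" by simp
  fix T K :: nat and eps :: "nat \<Rightarrow> real"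
  assume T1: "T > 1" and K1: "K > 1" and nn: "\<forall>j\<in>{1..K}. eps j \<ge> 0"
    and cond: "\<forall>j\<in>{1..K}. eps j > 0 \<longrightarrow> eps j ^ 2 \<ge> 2 / real T * (\<Sum>i=1..K. eps i ^ 2)"
  have T0: "T > 0" using T1 by simp
  have Tp: "real T > 0" using T0 by simp
  obtain k' where k'_def: "k' = (\<lambda>k::nat. if k = 1 then 2 else (1::nat))" by blast
  have other: "k' k \<in> {1..K} \<and> k' k \<noteq> k" for k using K1 k'_def by auto
  have zl: "\<forall>t\<in>{1..T}. \<forall>j\<in>{1..K}. \<bar>(\<lambda>_ _. 0::real) t j - 0\<bar> \<le> eps j" using nn by simp
  show "\<exists>m. (\<forall>A. valid_bandit_learner K A \<longrightarrow>
           (\<exists>l. (\<forall>t\<in>{1..T}. \<forall>j\<in>{1..K}. \<bar>l t j - m j\<bar> \<le> eps j) \<and>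
              bandit_exp_loss A l T - best_arm_loss K l T \<ge> 1/30 * sqrt (real T * (\<Sum>j=1..K. eps j ^ 2)))) \<and>
        (\<forall>A. valid_full_learner K A \<longrightarrow>
           (\<exists>l. (\<forall>t\<in>{1..T}. \<forall>j\<in>{1..K}. \<bar>l t j - m j\<bar> \<le> eps j) \<and>
              full_exp_loss A l T - best_arm_loss K l T \<ge> 1/30 * sqrt (real T * (MAX j\<in>{1..K}. eps j ^ 2))))"
  proof (intro exI[of _ "\<lambda>_. 0"] conjI allI impI)
    fix A assume valid: "valid_bandit_learner K A"
    define S where "S = (\<Sum>j=1..K. eps j ^ 2)"
    have S0: "S \<ge> 0" unfolding S_def by (simp add: sum_nonneg)
    show "\<exists>l. (\<forall>t\<in>{1..T}. \<forall>j\<in>{1..K}. \<bar>l t j - (\<lambda>_. 0) j\<bar> \<le> eps j) \<and>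
              bandit_exp_loss A l T - best_arm_loss K l T \<ge> 1/30 * sqrt (real T * (\<Sum>j=1..K. eps j ^ 2))"
    proof -
    have "\<exists>l. (\<forall>t\<in>{1..T}. \<forall>j\<in>{1..K}. \<bar>l t j - (\<lambda>_. 0) j\<bar> \<le> eps j) \<and>
              bandit_exp_loss A l T - best_arm_loss K l T \<ge> 1/30 * sqrt (real T * S)"
    proof (cases "S = 0")
      case True
      show ?thesis using zl zero_bandit[OF valid, of T] K1 True by (intro exI[of _ "\<lambda>_ _. 0"]) auto
    next
      case False
      then have Spos: "S > 0" using S0 by simp
      show ?thesis
      proof (cases "\<exists>k\<in>{1..K}. 8 * eps k ^ 2 \<ge> S")
        case True
        then obtain k where k: "k \<in> {1..K}" "8 * eps k ^ 2 \<ge> S" by blast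
        have ek: "eps k > 0"
        proof -
          have "eps k \<noteq> 0" using k(2) Spos by auto
          then show ?thesis using nn k(1) by force
        qed
        have E: "sqrt (T * (eps k)^2 / 3) / 2 \<le> measure_pmf.expectation (prior (\<lambda>s. rw_row k (eps k)) T) (\<lambda>l. bandit_exp_loss A l T - best_arm_loss K l T)"
          using rw_bandit[OF valid k(1) conjunct1[OF other[of k]] conjunct2[OF other[of k], symmetric] ek T0] by simp
        have "1/30 * sqrt (real T * S) \<le> sqrt (T * (eps k)^2 / 3) / 2"
        proof -
          have "1/30 * sqrt (real T * S) = 1/2 * sqrt ((1/15)^2 * (real T * S))"
            by (subst c_sqrt[symmetric]) auto
          also have "\<dots> \<le> 1/2 * sqrt (T * (eps k)^2 / 3)"
          proof (intro mult_left_mono real_sqrt_le_mono)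
            have "0 \<le> (eps k)^2" by simp
            then have "S / 225 \<le> (eps k)^2 / 3" using k(2) by linarith
            then have "(1/15)^2 * S \<le> (eps k)^2 / 3" by (simp add: power2_eq_square)
            then have "real T * ((1/15)^2 * S) \<le> real T * ((eps k)^2 / 3)" using Tp by (intro mult_left_mono) auto
            then show "(1/15)^2 * (real T * S) \<le> T * (eps k)^2 / 3" by (simp add: algebra_simps)
          qed simp
          finally show ?thesis by simp
        qed
        moreover obtain l where "(\<forall>t\<in>{1..T}. \<forall>j\<in>{1..K}. \<bar>l t j - 0\<bar> \<le> eps j)"
            "sqrt (T * (eps k)^2 / 3) / 2 \<le> bandit_exp_loss A l T - best_arm_loss K l T"
          using rw_exists[OF k(1) ek nn refl E] by blast
        ultimately show ?thesis by (intro exI[of _ l]) auto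
      next
        case False
        then have small: "\<forall>j\<in>{1..K}. 8 * eps j ^ 2 < (\<Sum>i=1..K. eps i ^ 2)" unfolding S_def by auto
        obtain l where l: "\<forall>t\<in>{1..T}. \<forall>j\<in>{1..K}. \<bar>l t j\<bar> \<le> eps j"
          "bandit_exp_loss A l T - best_arm_loss K l T \<ge> 5/12 * sqrt ((\<Sum>i=1..K. eps i ^ 2) / (128 * T)) * T"
          using caseB[OF valid T0 nn _ cond small] Spos unfolding S_def by blast
        have "1/30 * sqrt (real T * S) \<le> 5/12 * sqrt (S / (128 * T)) * T"
        proof -
          have "5/12 * sqrt (S / (128 * T)) * T = (5/12 * T) * sqrt (S / (128 * T))" by simp
          also have "\<dots> = sqrt ((5/12 * T)^2 * (S / (128 * T)))" by (rule c_sqrt) simp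
          finally have r: "5/12 * sqrt (S / (128 * T)) * T = sqrt ((5/12 * T)^2 * (S / (128 * T)))" .
          have "1/30 * sqrt (real T * S) = sqrt ((1/30)^2 * (real T * S))" by (rule c_sqrt) simp
          also have "\<dots> \<le> sqrt ((5/12 * T)^2 * (S / (128 * T)))"
            using Spos Tp by (intro real_sqrt_le_mono) (simp add: power2_eq_square field_simps)
          finally show ?thesis using r by simp
        qed
        then show ?thesis using l unfolding S_def by (intro exI[of _ l]) auto
      qed
    qed
    then show ?thesis unfolding S_def .
    qed
  next
    fix A assume valid: "valid_full_learner K A"
    define E2 where "E2 = (MAX j\<in>{1..K}. eps j ^ 2)"
    have "E2 \<in> (\<lambda>j. eps j ^ 2) ` {1..K}" unfolding E2_def using K1 by (intro Max_in) auto
    then obtain k where k: "k \<in> {1..K}" "eps k ^ 2 = E2" by auto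
    show "\<exists>l. (\<forall>t\<in>{1..T}. \<forall>j\<in>{1..K}. \<bar>l t j - (\<lambda>_. 0) j\<bar> \<le> eps j) \<and>
              full_exp_loss A l T - best_arm_loss K l T \<ge> 1/30 * sqrt (real T * (MAX j\<in>{1..K}. eps j ^ 2))"
    proof -
    have "\<exists>l. (\<forall>t\<in>{1..T}. \<forall>j\<in>{1..K}. \<bar>l t j - (\<lambda>_. 0) j\<bar> \<le> eps j) \<and>
              full_exp_loss A l T - best_arm_loss K l T \<ge> 1/30 * sqrt (real T * E2)"
    proof (cases "eps k = 0")
      case True
      then show ?thesis using zl zero_full[OF valid, of T] K1 k by (intro exI[of _ "\<lambda>_ _. 0"]) auto
    next
      case False
      then have ek: "eps k > 0" using nn k(1) by force
      have E: "sqrt (T * (eps k)^2 / 3) / 2 \<le> measure_pmf.expectation (prior (\<lambda>s. rw_row k (eps k)) T) (\<lambda>l. full_exp_loss A l T - best_arm_loss K l T)"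
        using rw_full[OF valid k(1) conjunct1[OF other[of k]] conjunct2[OF other[of k], symmetric] ek T0] by simp
      have "1/30 * sqrt (real T * E2) \<le> sqrt (T * (eps k)^2 / 3) / 2"
      proof -
        have "1/30 * sqrt (real T * E2) = 1/2 * sqrt ((1/15)^2 * (real T * E2))"
          by (subst c_sqrt[symmetric]) auto
        also have "\<dots> \<le> 1/2 * sqrt (T * (eps k)^2 / 3)"
          using k(2) Tp ek by (intro mult_left_mono real_sqrt_le_mono) (auto simp: power2_eq_square field_simps)
        finally show ?thesis by simp
      qed
      moreover obtain l where "(\<forall>t\<in>{1..T}. \<forall>j\<in>{1..K}. \<bar>l t j - 0\<bar> \<le> eps j)"
          "sqrt (T * (eps k)^2 / 3) / 2 \<le> full_exp_loss A l T - best_arm_loss K l T"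
        using rw_exists[OF k(1) ek nn refl E] by blast
      ultimately show ?thesis by (intro exI[of _ l]) auto
    qed
    then show ?thesis unfolding E2_def .
    qed
  qed
qed

end
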